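(* Fix integers $\ell\ge 3$ and $p_1,\dots,p_\ell\ge1$, and let $P_\ell=(p_1,\dots,p_\ell)$. For each $n$, with $A_p$ and $B_{P_\ell}$ as defined in the context, $$|B_{P_\ell}|=o\big(n^{\frac{p_1+p_2+\cdots+p_\ell-\ell}{2}}\big)\quad\text{as } n\to\infty.$$
   Context: For a positive integer $n$ and $p\ge1$, $A_p$ is the collection of vectors $J=(j_1,\dots,j_p)$ with $1\le j_1,\dots,j_p\le n/2$ for which there exist signs $\epsilon_i\in\{+1,-1\}$ with $\sum_{i=1}^p\epsilon_i j_i\equiv 0\pmod n$, counted with multiplicity (i.e. once for each admissible choice of signs). For $J=(j_1,\dots,j_p)$, $S_J$ is the multiset $\{j_1,\dots,j_p\}$. Two vectors $J,J'$ are connected if $S_J\cap S_{J'}\neq\emptyset$. A set of vectors $\{J_1,\dots,J_\ell\}$ forms a cluster if for any two of its members there is a chain of members of the set starting at one and ending at the other in which consecutive vectors are connected (i.e. the graph on $\{J_1,\dots,J_\ell\}$ with edges between connected vectors is connected). $B_{P_\ell}$ is the set of $(J_1,\dots,J_\ell)\in A_{p_1}\times\cdots\times A_{p_\ell}$ such that $\{J_1,\dots,J_\ell\}$ forms a cluster and every element of $\bigcup_{i=1}^\ell S_{J_i}$ has multiplicity at least two (in the combined multiset). *)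

theory Defs
  imports Main "HOL-Library.Multiset" "HOL-Library.Landau_Symbols"
begin

text \<open>Elements of A_p, counted with multiplicity: a pair (J, signs) where J is the
vector (j_1,...,j_p) with 1 <= j_i <= n/2 and signs is an admissible sign choice
with sum_i eps_i j_i = 0 mod n.\<close>
definition A_set :: "nat \<Rightarrow> nat \<Rightarrow> (nat list \<times> int list) set" where
  "A_set n p = {(J, e). length J = p \<and> length e = p
      \<and> (\<forall>j\<in>set J. 1 \<le> j \<and> 2 * j \<le> n)
      \<and> set e \<subseteq> {1, -1}
      \<and> (\<Sum>i<p. e ! i * int (J ! i)) mod int n = 0}"

definition is_cluster :: "nat list list \<Rightarrow> bool" where
  "is_cluster Js = (\<forall>a < length Js. \<forall>b < length Js.
      (a, b) \<in> {(i, k). i < length Js \<and> k < length Js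
                  \<and> set (Js ! i) \<inter> set (Js ! k) \<noteq> {}}\<^sup>*)"

definition B_set :: "nat \<Rightarrow> nat list \<Rightarrow> (nat list \<times> int list) list set" where
  "B_set n P = {Xs. length Xs = length P
      \<and> (\<forall>i < length P. Xs ! i \<in> A_set n (P ! i))
      \<and> is_cluster (map fst Xs)
      \<and> (\<forall>x \<in> (\<Union>i<length P. set (fst (Xs ! i))).
            2 \<le> count (\<Sum>i<length P. mset (fst (Xs ! i))) x)}"

end

theory Submission
  imports Defs "HOL-Library.FuncSet"
begin

locale comb =
  fixes L :: nat and occ :: "nat \<Rightarrow> 'b \<Rightarrow> nat" and coef :: "nat \<Rightarrow> 'b \<Rightarrow> int" and K :: "'b set"
  assumes finK: "finite K"
  and occK: "\<And>i b. i < L \<Longrightarrow> 0 < occ i b \<Longrightarrow> b \<in> K"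
  and abs_le: "\<And>i b. i < L \<Longrightarrow> \<bar>coef i b\<bar> \<le> int (occ i b)"
  and par: "\<And>i b. i < L \<Longrightarrow> even (int (occ i b) - coef i b)"
begin

definition deg :: "nat set \<Rightarrow> 'b \<Rightarrow> nat" where "deg W b = card {i \<in> W. coef i b \<noteq> 0}"
definition enabled :: "nat set \<Rightarrow> nat \<Rightarrow> bool" where
  "enabled W i \<longleftrightarrow> i \<in> W \<and> (\<exists>b. coef i b \<noteq> 0 \<and> deg W b = 1)"
definition iota :: "nat set \<Rightarrow> nat" where "iota W = card {i \<in> W. enabled W i}"
definition mm :: "'b \<Rightarrow> nat" where "mm b = (\<Sum>i<L. occ i b)"
definition izp :: "'b \<Rightarrow> bool" where "izp b \<longleftrightarrow> mm b = 2 \<and> (\<exists>i<L. occ i b = 2 \<and> coef i b = 0)"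
definition Y :: "nat set \<Rightarrow> 'b \<Rightarrow> nat" where
  "Y W b = (if izp b then 0 else card {i \<in> W. 0 < occ i b \<and> coef i b = 0})"
definition phi :: "nat set \<Rightarrow> 'b \<Rightarrow> nat" where "phi W b = (deg W b - 2) + Y W b"
definition Phi :: "nat set \<Rightarrow> nat" where "Phi W = (\<Sum>b\<in>K. phi W b)"
definition tri :: "(nat \<times> 'b) list \<Rightarrow> bool" where
  "tri piv \<longleftrightarrow> distinct (map fst piv) \<and> (\<forall>j<length piv. coef (fst (piv!j)) (snd (piv!j)) \<noteq> 0
      \<and> (\<forall>j'<j. coef (fst (piv!j')) (snd (piv!j)) = 0))"

lemma tri_Nil: "tri []" by (simp add: tri_def)

lemma tri_snoc:
  assumes "tri piv" "i \<notin> fst ` set piv" "coef i b \<noteq> 0" "\<And>i' b'. (i',b') \<in> set piv \<Longrightarrow> coef i' b = 0"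
  shows "tri (piv @ [(i,b)])"
  unfolding tri_def
proof (intro conjI allI impI)
  show "distinct (map fst (piv @ [(i, b)]))" using assms(1,2) by (auto simp: tri_def)
next
  fix j assume j: "j < length (piv @ [(i, b)])"
  show "coef (fst ((piv @ [(i, b)]) ! j)) (snd ((piv @ [(i, b)]) ! j)) \<noteq> 0"
  proof (cases "j < length piv")
    case True thus ?thesis using assms(1) by (auto simp: tri_def nth_append)
  next
    case False with j have "j = length piv" by simp
    thus ?thesis using assms(3) by (simp add: nth_append)
  qed
next
  fix j j' assume j: "j < length (piv @ [(i, b)])" and j': "j' < j"
  show "coef (fst ((piv @ [(i, b)]) ! j')) (snd ((piv @ [(i, b)]) ! j)) = 0"
  proof (cases "j < length piv")
    case True thus ?thesis using assms(1) j' by (auto simp: tri_def nth_append)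
  next
    case False with j have "j = length piv" by simp
    moreover have "piv ! j' \<in> set piv" using j' \<open>j = length piv\<close> by simp
    ultimately show ?thesis using assms(4)[of "fst (piv!j')" "snd (piv!j')"] j'
      by (simp add: nth_append)
  qed
qed

lemma tri_length:
  assumes "tri piv" "set (map fst piv) \<subseteq> W" "finite W"
  shows "length piv \<le> card W"
proof -
  have "length piv = card (set (map fst piv))" using assms(1) distinct_card[of "map fst piv"]
    by (simp add: tri_def)
  also have "\<dots> \<le> card W" using assms(2,3) by (intro card_mono) 
  finally show ?thesis .
qed

lemma deg_mono: "W' \<subseteq> W \<Longrightarrow> finite W \<Longrightarrow> deg W' b \<le> deg W b"
  unfolding deg_def by (rule card_mono) auto

lemma Y_mono: "W' \<subseteq> W \<Longrightarrow> finite W \<Longrightarrow> Y W' b \<le> Y W b"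
  unfolding Y_def by (auto intro!: card_mono)

lemma phi_mono: "W' \<subseteq> W \<Longrightarrow> finite W \<Longrightarrow> phi W' b \<le> phi W b"
  unfolding phi_def using deg_mono[of W' W b] Y_mono[of W' W b] by linarith

lemma Phi_mono: "W' \<subseteq> W \<Longrightarrow> finite W \<Longrightarrow> Phi W' \<le> Phi W"
  unfolding Phi_def by (intro sum_mono phi_mono)

lemma deg_pos: "finite W \<Longrightarrow> i \<in> W \<Longrightarrow> coef i b \<noteq> 0 \<Longrightarrow> 1 \<le> deg W b"
proof -
  assume a: "finite W" "i \<in> W" "coef i b \<noteq> 0"
  have "{i \<in> W. coef i b \<noteq> 0} \<noteq> {}" using a by auto
  moreover have "finite {i \<in> W. coef i b \<noteq> 0}" using a by simp
  ultimately show ?thesis unfolding deg_def by (simp add: Suc_le_eq card_gt_0_iff)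
qed

lemma deg_remove:
  assumes "finite W" "r \<in> W" "coef r b \<noteq> 0"
  shows "deg (W - {r}) b = deg W b - 1"
proof -
  have "{i \<in> W - {r}. coef i b \<noteq> 0} = {i \<in> W. coef i b \<noteq> 0} - {r}" by auto
  thus ?thesis unfolding deg_def using assms by (simp add: card_Diff_singleton)
qed

lemma enabled_remove:
  assumes "finite W" "enabled W i" "i \<noteq> r"
  shows "enabled (W - {r}) i"
proof -
  obtain b where b: "coef i b \<noteq> 0" "deg W b = 1" "i \<in> W" using assms(2) by (auto simp: enabled_def)
  have "deg (W - {r}) b \<le> 1" using deg_mono[of "W - {r}" W b] assms(1) b by auto
  moreover have "1 \<le> deg (W - {r}) b" using deg_pos[of "W - {r}" i b] assms b by auto
  ultimately show ?thesis using b assms by (auto simp: enabled_def intro!: exI[of _ b])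
qed

lemma iota_remove:
  assumes "finite W"
  shows "iota W \<le> iota (W - {r}) + 1"
proof -
  let ?S = "{i \<in> W - {r}. enabled (W - {r}) i}"
  have fS: "finite ?S" using assms by simp
  have "{i \<in> W. enabled W i} \<subseteq> insert r ?S"
    using enabled_remove[OF assms] by (auto simp: enabled_def)
  hence "iota W \<le> card (insert r ?S)"
    unfolding iota_def by (rule card_mono[rotated]) (use fS in simp)
  also have "\<dots> \<le> card ?S + 1" using fS by (simp add: card_insert_if)
  finally show ?thesis unfolding iota_def .
qed

lemma iota_pos:
  assumes "finite W" "enabled W i"
  shows "1 \<le> iota W"
proof -
  have "{i \<in> W. enabled W i} \<noteq> {}" using assms by (auto simp: enabled_def)
  moreover have "finite {i \<in> W. enabled W i}" using assms by simp
  ultimately show ?thesis unfolding iota_def by (simp add: Suc_le_eq card_gt_0_iff)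
qed

lemma Phi_drop:
  assumes "W' \<subseteq> W" "finite W" "D \<subseteq> K" "\<And>b. b \<in> D \<Longrightarrow> phi W' b < phi W b"
  shows "Phi W' + card D \<le> Phi W"
proof -
  have fD: "finite D" using assms(3) finK finite_subset by blast
  have "Phi W' + card D = (\<Sum>b\<in>K. phi W' b + (if b \<in> D then 1 else 0))"
    unfolding Phi_def using assms(3) fD finK by (simp add: sum.distrib sum.If_cases Int_absorb1)
  also have "\<dots> \<le> Phi W" unfolding Phi_def
    by (intro sum_mono) (use assms(4) phi_mono[OF assms(1,2)] in \<open>auto simp: Suc_le_eq\<close>)
  finally show ?thesis .
qed

lemma Wlemma:
  assumes HZ: "\<And>i. i < L \<Longrightarrow> (\<forall>b. coef i b = 0) \<Longrightarrow> \<exists>b. 0 < occ i b \<and> \<not> izp b"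
  shows "W \<subseteq> {..<L} \<Longrightarrow> \<exists>piv. tri piv \<and> set (map fst piv) \<subseteq> W \<and>
           2 * card W + iota W \<le> card W + Phi W + 2 * length piv"
proof (induction "card W" arbitrary: W rule: less_induct)
  case less
  have fW: "finite W" using less.prems finite_subset by blast
  show ?case
  proof (cases "W = {}")
    case True thus ?thesis by (intro exI[of _ "[]"]) (simp add: tri_Nil iota_def)
  next
    case False
    show ?thesis
    proof (cases "\<exists>r. enabled W r")
      case True
      then obtain r b where r: "r \<in> W" "coef r b \<noteq> 0" "deg W b = 1" by (auto simp: enabled_def)
      let ?W = "W - {r}"
      have lt: "card ?W < card W" by (rule card_Diff1_less[OF fW r(1)])
      obtain piv where piv: "tri piv" "set (map fst piv) \<subseteq> ?W"
        "2 * card ?W + iota ?W \<le> card ?W + Phi ?W + 2 * length piv"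
        using less.hyps[OF lt] less.prems by blast
      have only: "\<And>i. i \<in> W \<Longrightarrow> coef i b \<noteq> 0 \<Longrightarrow> i = r"
      proof -
        fix i assume "i \<in> W" "coef i b \<noteq> 0"
        obtain x where x: "{i \<in> W. coef i b \<noteq> 0} = {x}"
          using r(3) unfolding deg_def by (rule card_1_singletonE)
        have "{i \<in> W. coef i b \<noteq> 0} = {r}" using x r(1,2) by auto
        thus "i = r" using \<open>i \<in> W\<close> \<open>coef i b \<noteq> 0\<close> by auto
      qed
      have "tri (piv @ [(r,b)])"
      proof (rule tri_snoc[OF piv(1)])
        show "r \<notin> fst ` set piv" using piv(2) by auto
        show "coef r b \<noteq> 0" by fact
        fix i' b' assume "(i', b') \<in> set piv"
        hence "i' \<in> ?W" using piv(2) by force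
        thus "coef i' b = 0" using only by auto
      qed
      moreover have "set (map fst (piv @ [(r,b)])) \<subseteq> W" using piv(2) r(1) by auto
      moreover have "2 * card W + iota W \<le> card W + Phi W + 2 * length (piv @ [(r,b)])"
      proof -
        have "card W = card ?W + 1" using card_Suc_Diff1[OF fW r(1)] by simp
        moreover have "iota W \<le> iota ?W + 1" by (rule iota_remove[OF fW])
        moreover have "Phi ?W \<le> Phi W" by (rule Phi_mono) (use fW in auto)
        ultimately show ?thesis using piv(3) by simp
      qed
      ultimately show ?thesis by blast
    next
      case noen: False
      from False obtain r where r: "r \<in> W" by auto
      let ?W = "W - {r}"
      have lt: "card ?W < card W" by (rule card_Diff1_less[OF fW r(1)])
      obtain piv where piv: "tri piv" "set (map fst piv) \<subseteq> ?W"
        "2 * card ?W + iota ?W \<le> card ?W + Phi ?W + 2 * length piv"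
        using less.hyps[OF lt] less.prems by blast
      have cW: "card W = card ?W + 1" using card_Suc_Diff1[OF fW r] by simp
      have rL: "r < L" using r less.prems by auto
      have key: "Phi ?W + 1 \<le> Phi W + iota ?W"
      proof (cases "\<forall>b. coef r b = 0")
        case True
        then obtain b where b: "0 < occ r b" "\<not> izp b" using HZ[OF rL] by blast
        have bK: "b \<in> K" using occK[OF rL b(1)] .
        have "Y ?W b < Y W b"
        proof -
          have "{i \<in> ?W. 0 < occ i b \<and> coef i b = 0} \<subset> {i \<in> W. 0 < occ i b \<and> coef i b = 0}"
            using r b True by auto
          thus ?thesis unfolding Y_def using b(2) fW by (simp add: psubset_card_mono)
        qed
        hence "phi ?W b < phi W b" unfolding phi_def using deg_mono[of ?W W b] fW by auto
        hence "Phi ?W + card {b} \<le> Phi W" by (intro Phi_drop) (use fW bK in auto)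
        thus ?thesis by simp
      next
        case False
        then obtain b where b: "coef r b \<noteq> 0" by blast
        have d1: "1 \<le> deg W b" using deg_pos[OF fW r b] .
        have dne: "deg W b \<noteq> 1" using noen r b by (auto simp: enabled_def)
        have bK: "b \<in> K" using occK[OF rL] abs_le[OF rL, of b] b by fastforce
        have dr: "deg ?W b = deg W b - 1" by (rule deg_remove[OF fW r b])
        show ?thesis
        proof (cases "deg W b = 2")
          case True
          hence "deg ?W b = 1" using dr by simp
          then obtain r' where "{i \<in> ?W. coef i b \<noteq> 0} = {r'}" unfolding deg_def
            using card_1_singletonE by blast
          hence r': "r' \<in> ?W" "coef r' b \<noteq> 0" by auto
          have "enabled ?W r'" using r' \<open>deg ?W b = 1\<close> by (auto simp: enabled_def)
          hence "1 \<le> iota ?W" using iota_pos fW by blast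
          moreover have "Phi ?W \<le> Phi W" by (rule Phi_mono) (use fW in auto)
          ultimately show ?thesis by simp
        next
          case False
          hence "phi ?W b < phi W b" unfolding phi_def using d1 dne dr Y_mono[of ?W W b] fW by auto
          hence "Phi ?W + card {b} \<le> Phi W" by (intro Phi_drop) (use fW bK in auto)
          thus ?thesis by simp
        qed
      qed
      have "iota W = 0" using noen unfolding iota_def by simp
      hence "2 * card W + iota W \<le> card W + Phi W + 2 * length piv" using piv(3) cW key by simp
      thus ?thesis using piv(1,2) by blast
    qed
  qed
qed

definition adjR :: "(nat \<times> nat) set" where
  "adjR = {(i, j). i < L \<and> j < L \<and> (\<exists>b. 0 < occ i b \<and> 0 < occ j b)}"

lemma closure_adj:
  assumes "a \<in> S" "\<And>i j. i \<in> S \<Longrightarrow> (i, j) \<in> adjR \<Longrightarrow> j \<in> S" "(a, x) \<in> adjR\<^sup>*"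
  shows "x \<in> S"
  using assms(3,1) by (induction rule: rtrancl_induct) (use assms(2) in auto)

lemma izp_unique:
  assumes "izp b" "i < L" "j < L" "0 < occ i b" "0 < occ j b"
  shows "i = j"
proof -
  obtain i0 where i0: "i0 < L" "occ i0 b = 2" "coef i0 b = 0" and m: "mm b = 2"
    using assms(1) by (auto simp: izp_def)
  have one: "x = i0" if "x < L" "0 < occ x b" for x
  proof (rule ccontr)
    assume "x \<noteq> i0"
    hence "(\<Sum>y\<in>{i0, x}. occ y b) = occ i0 b + occ x b" by simp
    moreover have "(\<Sum>y\<in>{i0, x}. occ y b) \<le> mm b" unfolding mm_def
      by (rule sum_mono2) (use i0 that in auto)
    ultimately show False using m i0 that by simp
  qed
  show ?thesis using one[OF assms(2,4)] one[OF assms(3,5)] by simp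
qed

lemma izp_coef: "izp b \<Longrightarrow> i < L \<Longrightarrow> coef i b = 0"
proof -
  assume a: "izp b" "i < L"
  obtain i0 where i0: "i0 < L" "occ i0 b = 2" "coef i0 b = 0" using a(1) by (auto simp: izp_def)
  show "coef i b = 0"
  proof (cases "occ i b = 0")
    case True thus ?thesis using abs_le[OF a(2), of b] by simp
  next
    case False hence "i = i0" using izp_unique[OF a(1) a(2) i0(1)] i0 by simp
    thus ?thesis using i0 by simp
  qed
qed

lemma coef_occ: "i < L \<Longrightarrow> coef i b \<noteq> 0 \<Longrightarrow> 0 < occ i b"
  using abs_le[of i b] by fastforce

lemma coef_K: "i < L \<Longrightarrow> coef i b \<noteq> 0 \<Longrightarrow> b \<in> K"
  using coef_occ occK by blast

lemma zero_occ2: "i < L \<Longrightarrow> 0 < occ i b \<Longrightarrow> coef i b = 0 \<Longrightarrow> 2 \<le> occ i b"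
  using par[of i b] by (cases "occ i b = 1") auto

lemma mm_split:
  "card {i. i < L \<and> coef i b \<noteq> 0} + (\<Sum>i\<in>{i. i < L \<and> coef i b \<noteq> 0}. occ i b - 1)
     + 2 * card {i. i < L \<and> 0 < occ i b \<and> coef i b = 0} \<le> mm b"
proof -
  let ?D = "{i. i < L \<and> coef i b \<noteq> 0}" and ?Y = "{i. i < L \<and> 0 < occ i b \<and> coef i b = 0}"
  have fD: "finite ?D" and fY: "finite ?Y" by auto
  have "(\<Sum>i\<in>?D. occ i b) = (\<Sum>i\<in>?D. 1) + (\<Sum>i\<in>?D. occ i b - 1)"
    by (subst sum.distrib[symmetric]) (intro sum.cong, auto dest: coef_occ)
  hence sD: "(\<Sum>i\<in>?D. occ i b) = card ?D + (\<Sum>i\<in>?D. occ i b - 1)" by simp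
  have sY: "2 * card ?Y \<le> (\<Sum>i\<in>?Y. occ i b)"
  proof -
    have "2 * card ?Y = (\<Sum>i\<in>?Y. 2)" by simp
    also have "\<dots> \<le> (\<Sum>i\<in>?Y. occ i b)" by (intro sum_mono) (auto intro: zero_occ2)
    finally show ?thesis .
  qed
  have "(\<Sum>i\<in>?D. occ i b) + (\<Sum>i\<in>?Y. occ i b) = (\<Sum>i\<in>?D \<union> ?Y. occ i b)"
    by (rule sum.union_disjoint[symmetric]) auto
  also have "\<dots> \<le> mm b" unfolding mm_def by (rule sum_mono2) auto
  finally show ?thesis using sD sY by linarith
qed

lemma deg_R: "deg {..<L} b = card {i. i < L \<and> coef i b \<noteq> 0}"
  unfolding deg_def by (rule arg_cong[where f=card]) auto

lemma Y_R:
  assumes "\<not> izp b" shows "Y {..<L} b = card {i. i < L \<and> 0 < occ i b \<and> coef i b = 0}"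
proof -
  have "{i \<in> {..<L}. 0 < occ i b \<and> coef i b = 0} = {i. i < L \<and> 0 < occ i b \<and> coef i b = 0}" by auto
  thus ?thesis using assms by (simp add: Y_def)
qed

lemma block_bound:
  assumes "b \<in> K" "2 \<le> mm b"
  shows "2 + phi {..<L} b \<le> mm b"
proof (cases "izp b")
  case True
  hence "deg {..<L} b = 0" unfolding deg_R using izp_coef by auto
  thus ?thesis using True by (simp add: phi_def Y_def izp_def)
next
  case False
  let ?d = "card {i. i < L \<and> coef i b \<noteq> 0}" and ?y = "card {i. i < L \<and> 0 < occ i b \<and> coef i b = 0}"
  have ms: "?d + 2 * ?y \<le> mm b" using mm_split[of b] by linarith
  have ph: "phi {..<L} b = (?d - 2) + ?y" unfolding phi_def deg_R Y_R[OF False] ..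
  show ?thesis
  proof (cases "?d \<ge> 2")
    case True thus ?thesis using ms ph by linarith
  next
    case d: False
    show ?thesis
    proof (cases "?y \<ge> 2")
      case True thus ?thesis using ms ph d by linarith
    next
      case False
      show ?thesis
      proof (cases "?y = 1")
        case y1: True
        show ?thesis
        proof (cases "?d = 0")
          case d0: False thus ?thesis using ms ph y1 by linarith
        next
          case d0: True
          obtain i0 where Yeq: "{i. i < L \<and> 0 < occ i b \<and> coef i b = 0} = {i0}"
            using y1 card_1_singletonE by blast
          have i0: "i0 < L" "0 < occ i0 b" "coef i0 b = 0" using Yeq by auto
          have others: "occ i b = 0" if "i < L" "i \<noteq> i0" for i
          proof (rule ccontr)
            assume "occ i b \<noteq> 0"
            moreover have "coef i b = 0" using d0 that by auto
            ultimately have "i \<in> {i0}" using Yeq[symmetric] that by auto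
            thus False using that by simp
          qed
          have "mm b = occ i0 b + (\<Sum>i\<in>{..<L} - {i0}. occ i b)" unfolding mm_def
            by (rule sum.remove) (use i0 in auto)
          moreover have "(\<Sum>i\<in>{..<L} - {i0}. occ i b) = 0" using others by (intro sum.neutral) auto
          ultimately have "mm b = occ i0 b" by simp
          hence "mm b \<noteq> 2" using False i0 \<open>\<not> izp b\<close> by (auto simp: izp_def)
          thus ?thesis using ph d0 y1 assms(2) by simp
        qed
      next
        case y0: False
        hence "?y = 0" using False by linarith
        thus ?thesis using ph d assms(2) by linarith
      qed
    qed
  qed
qed

definition NN :: nat where "NN = (\<Sum>b\<in>K. mm b)"

lemma sum2phi: "(\<Sum>b\<in>K. 2 + phi W b) = 2 * card K + Phi W"
proof -
  have "(\<Sum>b\<in>K. 2 + phi W b) = (\<Sum>b\<in>K. (2::nat)) + (\<Sum>b\<in>K. phi W b)" by (rule sum.distrib)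
  thus ?thesis by (simp add: Phi_def mult.commute)
qed

lemma NK:
  assumes "\<And>b. b \<in> K \<Longrightarrow> 2 \<le> mm b"
  shows "2 * card K + Phi {..<L} \<le> NN"
proof -
  have "2 * card K + Phi {..<L} = (\<Sum>b\<in>K. 2 + phi {..<L} b)"
    by (rule sum2phi[symmetric])
  also have "\<dots> \<le> NN" unfolding NN_def by (intro sum_mono block_bound assms)
  finally show ?thesis .
qed

lemma tight_of:
  assumes "\<And>b. b \<in> K \<Longrightarrow> 2 \<le> mm b" "NN = 2 * card K + Phi {..<L}" "b \<in> K"
  shows "mm b = 2 + phi {..<L} b"
proof (rule ccontr)
  assume "mm b \<noteq> 2 + phi {..<L} b"
  hence lt: "2 + phi {..<L} b < mm b" using block_bound[OF assms(3) assms(1)[OF assms(3)]] by simp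
  have "(\<Sum>b\<in>K. 2 + phi {..<L} b) < (\<Sum>b\<in>K. mm b)"
    by (rule sum_strict_mono_ex1[OF finK]) (use block_bound assms(1) lt assms(3) in auto)
  thus False using assms(2) unfolding NN_def sum2phi by simp
qed

lemma PD1:
  assumes "r < L" "coef r b \<noteq> 0" "3 \<le> deg {..<L} b"
  shows "phi ({..<L} - {r}) b < phi {..<L} b"
proof -
  have "deg ({..<L} - {r}) b = deg {..<L} b - 1" by (rule deg_remove) (use assms in auto)
  moreover have "Y ({..<L} - {r}) b \<le> Y {..<L} b" by (rule Y_mono) auto
  ultimately show ?thesis unfolding phi_def using assms(3) by linarith
qed

lemma PD2:
  assumes "r < L" "0 < occ r b" "coef r b = 0" "\<not> izp b"
  shows "phi ({..<L} - {r}) b < phi {..<L} b"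
proof -
  have "{i \<in> {..<L} - {r}. 0 < occ i b \<and> coef i b = 0} \<subset> {i \<in> {..<L}. 0 < occ i b \<and> coef i b = 0}"
    using assms by auto
  hence "Y ({..<L} - {r}) b < Y {..<L} b" unfolding Y_def using assms(4) by (simp add: psubset_card_mono)
  moreover have "deg ({..<L} - {r}) b \<le> deg {..<L} b" by (rule deg_mono) auto
  ultimately show ?thesis unfolding phi_def by linarith
qed

lemma EP:
  assumes "r < L" "coef r b \<noteq> 0" "deg {..<L} b = 2"
  shows "\<exists>u. u < L \<and> u \<noteq> r \<and> coef u b \<noteq> 0 \<and> enabled ({..<L} - {r}) u \<and>
             (\<forall>i<L. coef i b \<noteq> 0 \<longrightarrow> i = r \<or> i = u)"
proof -
  have "deg ({..<L} - {r}) b = 1" using deg_remove[of "{..<L}" r b] assms by simp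
  then obtain u where u: "{i \<in> {..<L} - {r}. coef i b \<noteq> 0} = {u}" unfolding deg_def
    using card_1_singletonE by blast
  hence u1: "u < L" "u \<noteq> r" "coef u b \<noteq> 0" by auto
  have "enabled ({..<L} - {r}) u" using u1 \<open>deg ({..<L} - {r}) b = 1\<close> by (auto simp: enabled_def)
  moreover have "\<forall>i<L. coef i b \<noteq> 0 \<longrightarrow> i = r \<or> i = u" using u by auto
  ultimately show ?thesis using u1 by blast
qed

lemma iota2:
  assumes "finite W" "enabled W u1" "enabled W u2" "u1 \<noteq> u2"
  shows "2 \<le> iota W"
proof -
  have "{u1, u2} \<subseteq> {i \<in> W. enabled W i}" using assms by (auto simp: enabled_def)
  hence "card {u1, u2} \<le> iota W" unfolding iota_def by (rule card_mono[rotated]) (use assms(1) in simp)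
  thus ?thesis using assms(4) by simp
qed

definition Dl :: "nat \<Rightarrow> nat" where "Dl r = Phi {..<L} - Phi ({..<L} - {r})"

lemma Dl_ge:
  assumes "r < L" "D \<subseteq> K" "\<And>b. b \<in> D \<Longrightarrow> phi ({..<L} - {r}) b < phi {..<L} b"
  shows "card D \<le> Dl r"
  using Phi_drop[of "{..<L} - {r}" "{..<L}" D] assms unfolding Dl_def by auto

lemma stuck_deg:
  assumes "iota {..<L} = 0" "r < L" "coef r b \<noteq> 0"
  shows "2 \<le> deg {..<L} b"
proof -
  have "1 \<le> deg {..<L} b" using deg_pos[of "{..<L}" r b] assms by auto
  moreover have "deg {..<L} b \<noteq> 1"
  proof
    assume "deg {..<L} b = 1"
    hence "enabled {..<L} r" using assms by (auto simp: enabled_def)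
    thus False using iota_pos[of "{..<L}" r] assms(1) by simp
  qed
  ultimately show ?thesis by linarith
qed

lemma every_row:
  assumes "iota {..<L} = 0" "r < L"
    and HZ: "\<And>i. i < L \<Longrightarrow> (\<forall>b. coef i b = 0) \<Longrightarrow> \<exists>b. 0 < occ i b \<and> \<not> izp b"
  shows "1 \<le> iota ({..<L} - {r}) + Dl r"
proof (cases "\<forall>b. coef r b = 0")
  case True
  then obtain b where b: "0 < occ r b" "\<not> izp b" using HZ[OF assms(2)] by blast
  have "card {b} \<le> Dl r"
    by (rule Dl_ge) (use PD2[OF assms(2) b(1) _ b(2)] True occK[OF assms(2) b(1)] assms(2) in auto)
  thus ?thesis by simp
next
  case False
  then obtain b where b: "coef r b \<noteq> 0" by blast
  have d2: "2 \<le> deg {..<L} b" by (rule stuck_deg[OF assms(1,2) b])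
  show ?thesis
  proof (cases "deg {..<L} b = 2")
    case True
    then obtain u where "enabled ({..<L} - {r}) u" using EP[OF assms(2) b] by blast
    thus ?thesis using iota_pos[of "{..<L} - {r}" u] by simp
  next
    case False
    have "card {b} \<le> Dl r"
      by (rule Dl_ge) (use PD1[OF assms(2) b] d2 False coef_K[OF assms(2) b] assms(2) in auto)
    thus ?thesis by simp
  qed
qed

context
  assumes stuck: "iota {..<L} = 0"
  and tight: "\<And>b. b \<in> K \<Longrightarrow> mm b = 2 + phi {..<L} b"
  and small: "\<And>r. r < L \<Longrightarrow> iota ({..<L} - {r}) + Dl r \<le> 1"
  and mult: "\<And>b. b \<in> K \<Longrightarrow> 2 \<le> mm b"
  and nondeg: "\<And>i b. i < L \<Longrightarrow> \<bar>coef i b\<bar> = 1 \<Longrightarrow> \<exists>b'. b' \<noteq> b \<and> coef i b' \<noteq> 0"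
  and HZ: "\<And>i. i < L \<Longrightarrow> (\<forall>b. coef i b = 0) \<Longrightarrow> \<exists>b. 0 < occ i b \<and> \<not> izp b"
begin

lemma T1:
  assumes "b \<in> K" "\<not> izp b" "2 \<le> deg {..<L} b" "i < L" "0 < occ i b"
  shows "coef i b \<noteq> 0 \<and> occ i b = 1"
proof -
  let ?D = "{i. i < L \<and> coef i b \<noteq> 0}" and ?Y = "{i. i < L \<and> 0 < occ i b \<and> coef i b = 0}"
  have ms: "card ?D + (\<Sum>i\<in>?D. occ i b - 1) + 2 * card ?Y \<le> mm b" by (rule mm_split)
  have "mm b = 2 + ((card ?D - 2) + card ?Y)" using tight[OF assms(1)]
    unfolding phi_def deg_R[symmetric] Y_R[OF assms(2)] .
  hence mmeq: "mm b = card ?D + card ?Y" using assms(3) unfolding deg_R by linarith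
  have y0: "card ?Y = 0" and s0: "(\<Sum>i\<in>?D. occ i b - 1) = 0" using ms mmeq by linarith+
  have "coef i b \<noteq> 0"
  proof
    assume "coef i b = 0"
    hence "i \<in> ?Y" using assms(4,5) by auto
    moreover have "finite ?Y" by simp
    ultimately have "0 < card ?Y" using card_gt_0_iff by blast
    thus False using y0 by simp
  qed
  moreover have "occ i b - 1 = 0"
    using s0 calculation assms(4) by (simp add: sum_eq_0_iff)
  ultimately show ?thesis using assms(5) by simp
qed

lemma no_deg1: "deg {..<L} b \<noteq> 1"
proof
  assume "deg {..<L} b = 1"
  then obtain i where "{i \<in> {..<L}. coef i b \<noteq> 0} = {i}" unfolding deg_def
    using card_1_singletonE by blast
  hence "enabled {..<L} i" using \<open>deg {..<L} b = 1\<close> by (auto simp: enabled_def)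
  thus False using iota_pos[of "{..<L}" i] stuck by simp
qed

lemma T3:
  assumes "b \<in> K" "\<not> izp b" "deg {..<L} b = 0"
  shows "card {i. i < L \<and> 0 < occ i b} = 2"
proof -
  let ?Y = "{i. i < L \<and> 0 < occ i b}"
  have c0: "\<And>i. i < L \<Longrightarrow> coef i b = 0"
    using assms(3) unfolding deg_R by (simp add: card_eq_0_iff)
  have Yeq: "?Y = {i. i < L \<and> 0 < occ i b \<and> coef i b = 0}" using c0 by auto
  have "mm b = 2 + card ?Y" using tight[OF assms(1)] unfolding phi_def Y_R[OF assms(2)] assms(3) Yeq by simp
  moreover have mmY: "mm b = (\<Sum>i\<in>?Y. occ i b)" unfolding mm_def
    by (rule sum.mono_neutral_right) auto
  moreover have "2 * card ?Y \<le> (\<Sum>i\<in>?Y. occ i b)"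
  proof -
    have "2 * card ?Y = (\<Sum>i\<in>?Y. 2)" by simp
    also have "\<dots> \<le> (\<Sum>i\<in>?Y. occ i b)" by (intro sum_mono) (auto intro: zero_occ2 c0)
    finally show ?thesis .
  qed
  ultimately have le2: "card ?Y \<le> 2" by linarith
  have "card ?Y \<noteq> 1"
  proof
    assume "card ?Y = 1"
    then obtain i0 where i0: "?Y = {i0}" using card_1_singletonE by blast
    hence "mm b = occ i0 b" using mmY by simp
    moreover have "mm b = 3" using \<open>mm b = 2 + card ?Y\<close> \<open>card ?Y = 1\<close> by simp
    moreover have "i0 < L" using i0 by auto
    ultimately show False using par[of i0 b] c0[of i0] by simp
  qed
  moreover have "card ?Y \<noteq> 0"
  proof
    assume "card ?Y = 0"
    hence "mm b = 0" using mmY by simp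
    thus False using mult[OF assms(1)] by simp
  qed
  ultimately show ?thesis using le2 by linarith
qed

definition pc :: "nat \<Rightarrow> nat \<Rightarrow> bool" where
  "pc r u \<longleftrightarrow> (\<forall>a b. (a = r \<or> a = u) \<longrightarrow> 0 < occ a b \<longrightarrow> \<not> izp b \<longrightarrow>
      (\<forall>i<L. 0 < occ i b \<longrightarrow> i = r \<or> i = u))"

lemma contrib2:
  assumes "r < L" "2 \<le> iota ({..<L} - {r}) + Dl r"
  shows False
  using small[OF assms(1)] assms(2) by simp

lemma ZR:
  assumes "r < L" "\<forall>b. coef r b = 0"
  shows "\<exists>u. u < L \<and> u \<noteq> r \<and> pc r u"
proof -
  obtain h where h: "0 < occ r h" "\<not> izp h" using HZ[OF assms] by blast
  have hK: "h \<in> K" using occK[OF assms(1) h(1)] .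
  have dh: "deg {..<L} h = 0"
  proof -
    have "\<not> 2 \<le> deg {..<L} h" using T1[OF hK h(2) _ assms(1) h(1)] assms(2) by auto
    thus ?thesis using no_deg1[of h] by linarith
  qed
  have c0: "\<And>i. i < L \<Longrightarrow> coef i h = 0" using dh unfolding deg_R by (simp add: card_eq_0_iff)
  have cY: "card {i. i < L \<and> 0 < occ i h} = 2" by (rule T3[OF hK h(2) dh])
  then obtain x y where xy: "{i. i < L \<and> 0 < occ i h} = {x, y}" "x \<noteq> y" by (meson card_2_iff)
  have rin: "r \<in> {x, y}" using xy(1) assms(1) h(1) by blast
  obtain u where u: "{i. i < L \<and> 0 < occ i h} = {r, u}" "u \<noteq> r"
    using xy rin by (metis insert_commute insertE singletonD)
  have uL: "u < L" "0 < occ u h" using u(1) by blast+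
  have onlyh: "b = h" if "a = r \<or> a = u" "0 < occ a b" "\<not> izp b" "\<forall>b. coef a b = 0" for a b
  proof (rule ccontr)
    assume bh: "b \<noteq> h"
    have aL: "a < L" using that(1) assms(1) uL(1) by auto
    have "card {b, h} \<le> Dl a"
    proof (rule Dl_ge[OF aL])
      show "{b, h} \<subseteq> K" using occK[OF aL that(2)] hK by auto
      fix b' assume "b' \<in> {b, h}"
      thus "phi ({..<L} - {a}) b' < phi {..<L} b'"
      proof
        assume "b' = b" thus ?thesis using PD2[OF aL that(2) _ that(3)] that(4) by auto
      next
        assume "b' \<in> {h}" hence "b' = h" by simp
        moreover have "0 < occ a h" using that(1) h(1) uL(2) by auto
        ultimately show ?thesis using PD2[OF aL _ c0[OF aL] h(2)] by auto
      qed
    qed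
    thus False using contrib2[OF aL] bh by simp
  qed
  have uz: "\<forall>b. coef u b = 0"
  proof (rule ccontr)
    assume "\<not> (\<forall>b. coef u b = 0)"
    then obtain b where b: "coef u b \<noteq> 0" by blast
    have bh: "b \<noteq> h" using b c0[OF uL(1)] by auto
    have d2: "2 \<le> deg {..<L} b" by (rule stuck_deg[OF stuck uL(1) b])
    have Dh: "phi ({..<L} - {u}) h < phi {..<L} h" by (rule PD2[OF uL(1) uL(2) c0[OF uL(1)] h(2)])
    show False
    proof (cases "deg {..<L} b = 2")
      case True
      then obtain w where "enabled ({..<L} - {u}) w" using EP[OF uL(1) b] by blast
      hence "1 \<le> iota ({..<L} - {u})" using iota_pos[of "{..<L} - {u}" w] by simp
      moreover have "card {h} \<le> Dl u"
        by (rule Dl_ge[OF uL(1)]) (use hK Dh in auto)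
      ultimately show False using contrib2[OF uL(1)] by simp
    next
      case False
      have "card {b, h} \<le> Dl u"
        by (rule Dl_ge[OF uL(1)]) (use hK Dh coef_K[OF uL(1) b] PD1[OF uL(1) b] d2 False in auto)
      thus False using contrib2[OF uL(1)] bh by simp
    qed
  qed
  have "pc r u" unfolding pc_def
  proof (intro allI impI)
    fix a b i assume a: "a = r \<or> a = u" "0 < occ a b" "\<not> izp b" "i < L" "0 < occ i b"
    have "b = h" using onlyh[OF a(1-3)] a(1) assms(2) uz by blast
    thus "i = r \<or> i = u" using a(4,5) u(1) by blast
  qed
  thus ?thesis using uL u by blast
qed

lemma NZ:
  assumes "r < L" "coef r b0 \<noteq> 0"
  shows "\<exists>u. u < L \<and> u \<noteq> r \<and> coef u b0 \<noteq> 0 \<and>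
    (\<forall>b. 0 < occ r b \<longrightarrow> \<not> izp b \<longrightarrow> (\<forall>i<L. 0 < occ i b \<longrightarrow> i = r \<or> i = u))"
proof -
  have b0K: "b0 \<in> K" using coef_K[OF assms] .
  have nz0: "\<not> izp b0" using izp_coef[OF _ assms(1)] assms(2) by blast
  have d2: "2 \<le> deg {..<L} b0" by (rule stuck_deg[OF stuck assms])
  have deq: "deg {..<L} b0 = 2"
  proof (rule ccontr)
    assume ne: "deg {..<L} b0 \<noteq> 2"
    have D0: "phi ({..<L} - {r}) b0 < phi {..<L} b0" using PD1[OF assms] d2 ne by simp
    have "occ r b0 = 1" using T1[OF b0K nz0 d2 assms(1) coef_occ[OF assms]] by simp
    hence "\<bar>coef r b0\<bar> = 1" using abs_le[OF assms(1), of b0] assms(2) by linarith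
    then obtain b' where b': "b' \<noteq> b0" "coef r b' \<noteq> 0" using nondeg[OF assms(1)] by blast
    have d2': "2 \<le> deg {..<L} b'" by (rule stuck_deg[OF stuck assms(1) b'(2)])
    show False
    proof (cases "deg {..<L} b' = 2")
      case True
      then obtain w where "enabled ({..<L} - {r}) w" using EP[OF assms(1) b'(2)] by blast
      hence "1 \<le> iota ({..<L} - {r})" using iota_pos[of "{..<L} - {r}" w] by simp
      moreover have "card {b0} \<le> Dl r"
        by (rule Dl_ge[OF assms(1)]) (use b0K D0 in auto)
      ultimately show False using contrib2[OF assms(1)] by simp
    next
      case False
      have "card {b', b0} \<le> Dl r"
        by (rule Dl_ge[OF assms(1)])
           (use b0K D0 coef_K[OF assms(1) b'(2)] PD1[OF assms(1) b'(2)] d2' False in auto)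
      thus False using contrib2[OF assms(1)] b'(1) by simp
    qed
  qed
  obtain u where u: "u < L" "u \<noteq> r" "coef u b0 \<noteq> 0" "enabled ({..<L} - {r}) u"
    "\<forall>i<L. coef i b0 \<noteq> 0 \<longrightarrow> i = r \<or> i = u" using EP[OF assms deq] by blast
  have io1: "1 \<le> iota ({..<L} - {r})" using iota_pos[OF _ u(4)] by simp
  have main: "\<forall>i<L. 0 < occ i b \<longrightarrow> i = r \<or> i = u" if b: "0 < occ r b" "\<not> izp b" for b
  proof -
    have bK: "b \<in> K" using occK[OF assms(1) b(1)] .
    have cb: "coef r b \<noteq> 0"
    proof
      assume "coef r b = 0"
      hence "card {b} \<le> Dl r"
        using Dl_ge[OF assms(1), of "{b}"] PD2[OF assms(1) b(1) _ b(2)] bK by auto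
      thus False using io1 contrib2[OF assms(1)] by simp
    qed
    have db2: "2 \<le> deg {..<L} b" by (rule stuck_deg[OF stuck assms(1) cb])
    have db: "deg {..<L} b = 2"
    proof (rule ccontr)
      assume "deg {..<L} b \<noteq> 2"
      hence "card {b} \<le> Dl r"
        using Dl_ge[OF assms(1), of "{b}"] PD1[OF assms(1) cb] db2 bK by auto
      thus False using io1 contrib2[OF assms(1)] by simp
    qed
    obtain u' where u': "u' < L" "u' \<noteq> r" "coef u' b \<noteq> 0" "enabled ({..<L} - {r}) u'"
      "\<forall>i<L. coef i b \<noteq> 0 \<longrightarrow> i = r \<or> i = u'" using EP[OF assms(1) cb db] by blast
    have "u' = u"
    proof (rule ccontr)
      assume "u' \<noteq> u"
      hence "2 \<le> iota ({..<L} - {r})" using iota2[OF _ u'(4) u(4)] by simp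
      thus False using contrib2[OF assms(1)] by simp
    qed
    show ?thesis
    proof (intro allI impI)
      fix i assume "i < L" "0 < occ i b"
      hence "coef i b \<noteq> 0" using T1[OF bK b(2) db2] by blast
      thus "i = r \<or> i = u" using u'(5) \<open>i < L\<close> \<open>u' = u\<close> by blast
    qed
  qed
  show ?thesis using u main by blast
qed

lemma pc_exists: "0 < L \<Longrightarrow> \<exists>r u. r < L \<and> u < L \<and> u \<noteq> r \<and> pc r u"
proof -
  assume L0: "0 < L"
  show ?thesis
  proof (cases "\<forall>b. coef 0 b = 0")
    case True thus ?thesis using ZR[OF L0 True] L0 by blast
  next
    case False
    then obtain b0 where b0: "coef 0 b0 \<noteq> 0" by blast
    obtain u where u: "u < L" "u \<noteq> 0" "coef u b0 \<noteq> 0"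
      "\<forall>b. 0 < occ 0 b \<longrightarrow> \<not> izp b \<longrightarrow> (\<forall>i<L. 0 < occ i b \<longrightarrow> i = 0 \<or> i = u)"
      using NZ[OF L0 b0] by blast
    obtain u2 where u2: "u2 < L" "u2 \<noteq> u" "coef u2 b0 \<noteq> 0"
      "\<forall>b. 0 < occ u b \<longrightarrow> \<not> izp b \<longrightarrow> (\<forall>i<L. 0 < occ i b \<longrightarrow> i = u \<or> i = u2)"
      using NZ[OF u(1) u(3)] by blast
    have nz0: "\<not> izp b0" using izp_coef[OF _ L0] b0 by blast
    have "u2 = 0" using u2(4)[rule_format, OF coef_occ[OF u(1) u(3)] nz0 L0 coef_occ[OF L0 b0]] u(2) by auto
    hence "pc 0 u" unfolding pc_def using u(4) u2(4) by blast
    thus ?thesis using L0 u by blast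
  qed
qed

lemma sigma0_False:
  assumes "3 \<le> L" and conn: "\<And>a x. a < L \<Longrightarrow> x < L \<Longrightarrow> (a, x) \<in> adjR\<^sup>*"
  shows False
proof -
  obtain r u where ru: "r < L" "u < L" "u \<noteq> r" "pc r u" using pc_exists assms(1) by auto
  have "\<exists>x<L. x \<noteq> r \<and> x \<noteq> u"
  proof -
    have "card {r, u} < card {..<L}" using ru assms(1) by simp
    have "\<exists>x\<in>{0,1,2::nat}. x \<noteq> r \<and> x \<noteq> u" by auto
    then obtain x where "x \<in> {0,1,2::nat}" "x \<noteq> r" "x \<noteq> u" by blast
    moreover have "x < L" using calculation(1) assms(1) by auto
    ultimately show ?thesis by blast
  qed
  then obtain x where x: "x < L" "x \<noteq> r" "x \<noteq> u" by blast
  have "x \<in> {r, u}"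
  proof (rule closure_adj[OF _ _ conn[OF ru(1) x(1)]])
    show "r \<in> {r, u}" by simp
    fix i j assume i: "i \<in> {r, u}" and ij: "(i, j) \<in> adjR"
    then obtain b where b: "0 < occ i b" "0 < occ j b" "i < L" "j < L" by (auto simp: adjR_def)
    show "j \<in> {r, u}"
    proof (cases "izp b")
      case True thus ?thesis using izp_unique[OF True b(3,4,1,2)] i by simp
    next
      case False thus ?thesis using ru(4) i b unfolding pc_def by blast
    qed
  qed
  thus False using x by auto
qed

end

theorem comb_main:
  assumes L3: "3 \<le> L" and conn: "\<And>a x. a < L \<Longrightarrow> x < L \<Longrightarrow> (a, x) \<in> adjR\<^sup>*"
  and mult: "\<And>b. b \<in> K \<Longrightarrow> 2 \<le> mm b"
  and nondeg: "\<And>i b. i < L \<Longrightarrow> \<bar>coef i b\<bar> = 1 \<Longrightarrow> \<exists>b'. b' \<noteq> b \<and> coef i b' \<noteq> 0"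
  shows "\<exists>piv. tri piv \<and> set (map fst piv) \<subseteq> {..<L} \<and> 2 * card K + L + 1 \<le> NN + 2 * length piv"
proof -
  have HZ: "\<exists>b. 0 < occ i b \<and> \<not> izp b" if i: "i < L" "\<forall>b. coef i b = 0" for i
  proof (rule ccontr)
    assume "\<not> (\<exists>b. 0 < occ i b \<and> \<not> izp b)"
    hence allz: "\<And>b. 0 < occ i b \<Longrightarrow> izp b" by blast
    define x where "x = (if i = 0 then 1 else (0::nat))"
    have x: "x < L" "x \<noteq> i" using L3 unfolding x_def by auto
    have "x \<in> {i}"
    proof (rule closure_adj[OF _ _ conn[OF i(1) x(1)]])
      show "i \<in> {i}" by simp
      fix a j assume a: "a \<in> {i}" and aj: "(a, j) \<in> adjR"
      then obtain b where b: "0 < occ a b" "0 < occ j b" "a < L" "j < L" by (auto simp: adjR_def)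
      have ai: "a = i" using a by simp
      have "izp b" using allz b(1) ai by simp
      from izp_unique[OF this b(3) b(4) b(1) b(2)] show "j \<in> {i}" using ai by simp
    qed
    thus False using x by simp
  qed
  have fR: "finite {..<L}" by simp
  have nk: "2 * card K + Phi {..<L} \<le> NN" using NK[OF mult] by simp
  show ?thesis
  proof (cases "iota {..<L} = 0")
    case False
    obtain piv where piv: "tri piv" "set (map fst piv) \<subseteq> {..<L}"
      "2 * card {..<L} + iota {..<L} \<le> card {..<L} + Phi {..<L} + 2 * length piv"
      using Wlemma[OF HZ order_refl] by blast
    have "2 * card K + L + 1 \<le> NN + 2 * length piv" using piv(3) False nk by simp
    thus ?thesis using piv by blast
  next
    case stuck: True
    define \<sigma> where "\<sigma> = NN - (2 * card K + Phi {..<L})"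
    have "\<exists>r0<L. 2 \<le> iota ({..<L} - {r0}) + Dl r0 + \<sigma>"
    proof (cases "\<sigma> \<ge> 2")
      case True
      have h0: "0 < L" using L3 by simp
      have "2 \<le> iota ({..<L} - {0}) + Dl 0 + \<sigma>" using True by simp
      thus ?thesis using h0 by blast
    next
      case False
      show ?thesis
      proof (cases "\<sigma> = 1")
        case True
        have h0: "0 < L" using L3 by simp
        have "1 \<le> iota ({..<L} - {0}) + Dl 0" using every_row[OF stuck h0 HZ] by simp
        hence "2 \<le> iota ({..<L} - {0}) + Dl 0 + \<sigma>" using True by simp
        thus ?thesis using h0 by blast
      next
        case s1: False
        hence s0: "NN = 2 * card K + Phi {..<L}" using False nk unfolding \<sigma>_def by linarith
        have tight: "\<And>b. b \<in> K \<Longrightarrow> mm b = 2 + phi {..<L} b" by (rule tight_of[OF mult s0])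
        show ?thesis
        proof (rule ccontr)
          assume "\<not> ?thesis"
          hence small: "\<And>r. r < L \<Longrightarrow> iota ({..<L} - {r}) + Dl r \<le> 1" by fastforce
          show False by (rule sigma0_False[OF stuck tight small mult nondeg HZ L3 conn]) auto
        qed
      qed
    qed
    then obtain r0 where r0: "r0 < L" "2 \<le> iota ({..<L} - {r0}) + Dl r0 + \<sigma>" by blast
    have sub: "{..<L} - {r0} \<subseteq> {..<L}" by auto
    obtain piv where piv: "tri piv" "set (map fst piv) \<subseteq> {..<L} - {r0}"
      "2 * card ({..<L} - {r0}) + iota ({..<L} - {r0}) \<le> card ({..<L} - {r0}) + Phi ({..<L} - {r0}) + 2 * length piv"
      using Wlemma[OF HZ sub] by blast
    have cR: "card ({..<L} - {r0}) = L - 1" using r0(1) by simp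
    have pm: "Phi ({..<L} - {r0}) \<le> Phi {..<L}" by (rule Phi_mono) auto
    have "2 * card K + L + 1 \<le> NN + 2 * length piv"
      using piv(3) cR pm r0(2) nk L3 unfolding Dl_def \<sigma>_def by linarith
    thus ?thesis using piv by blast
  qed
qed

end
definition cf :: "'a list \<Rightarrow> int list \<Rightarrow> 'a \<Rightarrow> int" where
  "cf xs es b = sum_list (map (\<lambda>(x, e). if x = b then e else 0) (zip xs es))"

lemma cf_Cons: "cf (x # xs) (e # es) b = (if x = b then e else 0) + cf xs es b"
  by (simp add: cf_def)

lemma cf_Nil: "cf [] es b = 0" by (simp add: cf_def)

lemma cf_props:
  assumes "length xs = length es" "set es \<subseteq> {1, -1}"
  shows "\<bar>cf xs es b\<bar> \<le> int (count (mset xs) b) \<and> even (int (count (mset xs) b) - cf xs es b)"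
  using assms
proof (induction xs es rule: list_induct2)
  case Nil thus ?case by (simp add: cf_Nil)
next
  case (Cons x xs e es)
  hence IH: "\<bar>cf xs es b\<bar> \<le> int (count (mset xs) b)" "even (int (count (mset xs) b) - cf xs es b)" by auto
  have e: "e = 1 \<or> e = -1" using Cons.prems by auto
  show ?case
  proof (cases "x = b")
    case True
    have "int (count (mset (x # xs)) b) - cf (x # xs) (e # es) b = (int (count (mset xs) b) - cf xs es b) + (1 - e)"
      using True by (simp add: cf_Cons)
    moreover have "even (1 - e)" using e by auto
    ultimately show ?thesis using IH True e by (auto simp: cf_Cons)
  next
    case False thus ?thesis using IH by (simp add: cf_Cons)
  qed
qed

lemma cf_nz: "cf xs es b \<noteq> 0 \<Longrightarrow> b \<in> set xs"
proof (induction xs arbitrary: es)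
  case Nil thus ?case by (simp add: cf_Nil)
next
  case (Cons x xs) thus ?case by (cases es) (auto simp: cf_def split: if_splits)
qed

lemma cf_map:
  assumes "inj_on f (insert b (set xs))"
  shows "cf (map f xs) es (f b) = cf xs es b"
  using assms
proof (induction xs arbitrary: es)
  case Nil thus ?case by (simp add: cf_def)
next
  case (Cons x xs)
  show ?case
  proof (cases es)
    case Nil thus ?thesis by (simp add: cf_def)
  next
    case (Cons e es')
    have "f x = f b \<Longrightarrow> x = b" by (rule inj_onD[OF Cons.prems]) auto
    hence "f x = f b \<longleftrightarrow> x = b" by blast
    moreover have "inj_on f (insert b (set xs))" using Cons.prems by (rule inj_on_subset) auto
    ultimately show ?thesis using Cons.IH Cons by (simp add: cf_Cons)
  qed
qed

lemma sum_cf: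
  assumes "finite A" "set xs \<subseteq> A"
  shows "sum_list (map (\<lambda>(x, e). e * g x) (zip xs es)) = (\<Sum>a\<in>A. cf xs es a * g a)"
  using assms(2)
proof (induction xs arbitrary: es)
  case Nil thus ?case by (simp add: cf_def)
next
  case (Cons x xs)
  show ?case
  proof (cases es)
    case Nil thus ?thesis by (simp add: cf_def)
  next
    case (Cons e es')
    have xA: "x \<in> A" using Cons.prems by simp
    have "(\<Sum>a\<in>A. cf (x # xs) (e # es') a * g a) = (\<Sum>a\<in>A. (if x = a then e * g a else 0)) + (\<Sum>a\<in>A. cf xs es' a * g a)"
    proof -
      have "(\<Sum>a\<in>A. cf (x # xs) (e # es') a * g a) = (\<Sum>a\<in>A. (if x = a then e * g a else 0) + cf xs es' a * g a)"
        by (intro sum.cong) (auto simp: cf_Cons distrib_right)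
      thus ?thesis by (simp add: sum.distrib)
    qed
    also have "(\<Sum>a\<in>A. (if x = a then e * g a else 0)) = e * g x"
      using xA assms(1) by (simp add: sum.delta)
    finally show ?thesis using Cons.IH[of es'] Cons.prems Cons by simp
  qed
qed

lemma sum_nth_zip:
  assumes "length xs = p" "length es = p"
  shows "(\<Sum>t<p. es ! t * g (xs ! t)) = sum_list (map (\<lambda>(x, e). e * g x) (zip xs es))"
proof -
  have "sum_list (map (\<lambda>(x, e). e * g x) (zip xs es)) = (\<Sum>t<length (zip xs es). (\<lambda>(x, e). e * g x) (zip xs es ! t))"
    by (simp add: sum_list_sum_nth atLeast0LessThan)
  also have "\<dots> = (\<Sum>t<p. es ! t * g (xs ! t))" using assms by (intro sum.cong) auto
  finally show ?thesis by simp
qed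

lemma residue_count:
  fixes c S :: int and n h :: nat
  assumes c: "c \<noteq> 0" and n: "0 < n" and hn: "h \<le> n"
  shows "card {x \<in> {1..h}. (c * int x + S) mod int n = 0} \<le> 2 * nat \<bar>c\<bar>"
proof (cases "{x \<in> {1..h}. (c * int x + S) mod int n = 0} = {}")
  case True show ?thesis by (simp only: True card.empty)
next
  case False
  let ?T = "{x \<in> {1..h}. (c * int x + S) mod int n = 0}"
  obtain x0 where x0: "x0 \<in> ?T" using False by (meson equals0I)
  define \<phi> where "\<phi> x = (c * (int x - int x0)) div int n" for x
  have dvd: "int n dvd c * (int x - int x0)" if "x \<in> ?T" for x
  proof -
    have "int n dvd c * int x + S" using that by (simp add: dvd_eq_mod_eq_0)
    moreover have "int n dvd c * int x0 + S" using x0 by (simp add: dvd_eq_mod_eq_0)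
    ultimately have "int n dvd (c * int x + S) - (c * int x0 + S)" by (rule dvd_diff)
    thus ?thesis by (simp add: right_diff_distrib)
  qed
  have eq: "c * (int x - int x0) = int n * \<phi> x" if "x \<in> ?T" for x
    using dvd[OF that] unfolding \<phi>_def by simp
  have inj: "inj_on \<phi> ?T"
  proof
    fix x y assume xy: "x \<in> ?T" "y \<in> ?T" "\<phi> x = \<phi> y"
    hence "c * (int x - int x0) = c * (int y - int x0)" using eq by simp
    thus "x = y" using c by simp
  qed
  have rng: "\<phi> ` ?T \<subseteq> {-(\<bar>c\<bar> - 1)..\<bar>c\<bar> - 1}"
  proof
    fix q assume "q \<in> \<phi> ` ?T"
    then obtain x where x': "q = \<phi> x" "x \<in> ?T" by (rule imageE)
    hence x: "x \<in> ?T" "q = \<phi> x" by simp_all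
    have "\<bar>int x - int x0\<bar> < int n" using x(1) x0 hn by auto
    hence "\<bar>c * (int x - int x0)\<bar> < \<bar>c\<bar> * int n"
      using c by (simp add: abs_mult mult_strict_left_mono)
    hence "int n * \<bar>q\<bar> < \<bar>c\<bar> * int n" using eq[OF x(1)] x(2) by (simp add: abs_mult)
    hence "\<bar>q\<bar> < \<bar>c\<bar>" using n by (simp add: mult.commute)
    thus "q \<in> {-(\<bar>c\<bar> - 1)..\<bar>c\<bar> - 1}" by auto
  qed
  have "card ?T \<le> card {-(\<bar>c\<bar> - 1)..\<bar>c\<bar> - 1}" by (rule card_inj_on_le[OF inj rng]) simp
  also have "\<dots> \<le> 2 * nat \<bar>c\<bar>" by simp
  finally show ?thesis .
qed

definition Gset :: "'a set \<Rightarrow> ('r \<Rightarrow> 'a \<Rightarrow> int) \<Rightarrow> ('r \<times> 'a) list \<Rightarrow> nat \<Rightarrow> nat \<Rightarrow> ('a \<Rightarrow> nat) set" where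
  "Gset A C piv h n = {g \<in> A \<rightarrow>\<^sub>E {1..h}. \<forall>p\<in>set piv. (\<Sum>a\<in>A. C (fst p) a * int (g a)) mod int n = 0}"

definition triC :: "('r \<Rightarrow> 'a \<Rightarrow> int) \<Rightarrow> ('r \<times> 'a) list \<Rightarrow> bool" where
  "triC C piv \<longleftrightarrow> (\<forall>j<length piv. C (fst (piv!j)) (snd (piv!j)) \<noteq> 0
      \<and> (\<forall>j'<j. C (fst (piv!j')) (snd (piv!j)) = 0))"

lemma triC_butlast:
  assumes "triC C (piv @ [p])"
  shows "triC C piv" "C (fst p) (snd p) \<noteq> 0" "\<And>q. q \<in> set piv \<Longrightarrow> C (fst q) (snd p) = 0"
    "\<And>q. q \<in> set piv \<Longrightarrow> snd q \<noteq> snd p"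
proof -
  show "triC C piv" unfolding triC_def
  proof (intro allI impI conjI)
    fix j assume j: "j < length piv"
    have A: "C (fst ((piv@[p])!j)) (snd ((piv@[p])!j)) \<noteq> 0 \<and> (\<forall>j'<j. C (fst ((piv@[p])!j')) (snd ((piv@[p])!j)) = 0)"
      using assms j unfolding triC_def by simp
    thus "C (fst (piv!j)) (snd (piv!j)) \<noteq> 0" using j by (simp add: nth_append)
    fix j' assume "j' < j"
    thus "C (fst (piv!j')) (snd (piv!j)) = 0" using A j by (simp add: nth_append)
  qed
next
  have lt: "length piv < length (piv @ [p])" by simp
  have "C (fst ((piv@[p])!length piv)) (snd ((piv@[p])!length piv)) \<noteq> 0" using assms lt unfolding triC_def by blast
  thus "C (fst p) (snd p) \<noteq> 0" by simp
next
  fix q assume "q \<in> set piv"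
  then obtain j where j: "j < length piv" "piv ! j = q" by (auto simp: in_set_conv_nth)
  have "C (fst ((piv @ [p]) ! j)) (snd ((piv @ [p]) ! length piv)) = 0"
    using assms j(1) unfolding triC_def by auto
  thus "C (fst q) (snd p) = 0" using j by (simp add: nth_append)
  have "C (fst ((piv @ [p]) ! j)) (snd ((piv @ [p]) ! j)) \<noteq> 0"
    using assms j(1) unfolding triC_def by auto
  hence "C (fst q) (snd q) \<noteq> 0" using j by (simp add: nth_append)
  thus "snd q \<noteq> snd p" using \<open>C (fst q) (snd p) = 0\<close> by auto
qed

lemma count_tri:
  fixes C :: "'r \<Rightarrow> 'a \<Rightarrow> int" and M :: nat
  assumes n: "0 < n" and hn: "h \<le> n"
  shows "finite A \<Longrightarrow> triC C piv \<Longrightarrow> set (map snd piv) \<subseteq> A \<Longrightarrow> (\<forall>p\<in>set piv. \<bar>C (fst p) (snd p)\<bar> \<le> int M)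
    \<Longrightarrow> card (Gset A C piv h n) \<le> (2 * M) ^ length piv * h ^ (card A - length piv)"
proof (induction piv arbitrary: A rule: rev_induct)
  case Nil
  have "Gset A C [] h n = A \<rightarrow>\<^sub>E {1..h}" by (simp add: Gset_def)
  thus ?case using Nil.prems(1) by (simp add: card_PiE)
next
  case (snoc p piv)
  obtain i \<beta> where p: "p = (i, \<beta>)" by (cases p)
  have tri: "triC C piv" and ci: "C i \<beta> \<noteq> 0" and z: "\<And>q. q \<in> set piv \<Longrightarrow> C (fst q) \<beta> = 0"
    and dif: "\<And>q. q \<in> set piv \<Longrightarrow> snd q \<noteq> \<beta>"
    using triC_butlast[OF snoc.prems(2)] p by auto
  have bA: "\<beta> \<in> A" using snoc.prems(3) p by simp
  define A' where "A' = A - {\<beta>}"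
  have fA': "finite A'" using snoc.prems(1) by (simp add: A'_def)
  have sA': "set (map snd piv) \<subseteq> A'" using snoc.prems(3) dif unfolding A'_def by force
  have IH: "card (Gset A' C piv h n) \<le> (2 * M) ^ length piv * h ^ (card A' - length piv)"
    by (rule snoc.IH[OF fA' tri sA']) (use snoc.prems(4) in auto)
  have Mi: "\<bar>C i \<beta>\<bar> \<le> int M" using snoc.prems(4) p by auto
  let ?G = "Gset A C (piv @ [p]) h n" and ?G' = "Gset A' C piv h n"
  let ?\<rho> = "\<lambda>g. restrict g A'"
  have split: "(\<Sum>a\<in>A. C r a * int (g a)) = C r \<beta> * int (g \<beta>) + (\<Sum>a\<in>A'. C r a * int (?\<rho> g a))" for r g
  proof -
    have "(\<Sum>a\<in>A. C r a * int (g a)) = C r \<beta> * int (g \<beta>) + (\<Sum>a\<in>A'. C r a * int (g a))"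
      unfolding A'_def by (rule sum.remove[OF snoc.prems(1) bA])
    also have "(\<Sum>a\<in>A'. C r a * int (g a)) = (\<Sum>a\<in>A'. C r a * int (?\<rho> g a))"
      by (intro sum.cong) auto
    finally show ?thesis .
  qed
  have img: "?\<rho> ` ?G \<subseteq> ?G'"
  proof
    fix g' assume "g' \<in> ?\<rho> ` ?G"
    then obtain g where g': "g' = ?\<rho> g" "g \<in> ?G" by (rule imageE)
    hence g: "g \<in> ?G" "g' = ?\<rho> g" by simp_all
    have "g' \<in> A' \<rightarrow>\<^sub>E {1..h}" using g unfolding Gset_def A'_def by (auto simp: PiE_iff)
    moreover have "\<forall>q\<in>set piv. (\<Sum>a\<in>A'. C (fst q) a * int (g' a)) mod int n = 0"
    proof
      fix q assume q: "q \<in> set piv"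
      have "(\<Sum>a\<in>A. C (fst q) a * int (g a)) mod int n = 0" using g(1) q unfolding Gset_def by auto
      thus "(\<Sum>a\<in>A'. C (fst q) a * int (g' a)) mod int n = 0" using split[of "fst q" g] z[OF q] g(2) by simp
    qed
    ultimately have "g' \<in> A' \<rightarrow>\<^sub>E {1..h} \<and> (\<forall>q\<in>set piv. (\<Sum>a\<in>A'. C (fst q) a * int (g' a)) mod int n = 0)"
      by (rule conjI)
    thus "g' \<in> ?G'" unfolding Gset_def by simp
  qed
  have fib: "card {g \<in> ?G. ?\<rho> g = g'} \<le> 2 * M" if "g' \<in> ?G'" for g'
  proof -
    let ?S = "(\<Sum>a\<in>A'. C i a * int (g' a))"
    have "(\<lambda>g. g \<beta>) ` {g \<in> ?G. ?\<rho> g = g'} \<subseteq> {x \<in> {1..h}. (C i \<beta> * int x + ?S) mod int n = 0}"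
    proof
      fix x assume "x \<in> (\<lambda>g. g \<beta>) ` {g \<in> ?G. ?\<rho> g = g'}"
      then obtain g where g': "x = g \<beta>" "g \<in> {g \<in> ?G. ?\<rho> g = g'}" by (rule imageE)
      hence g: "g \<in> ?G" "?\<rho> g = g'" "x = g \<beta>" by simp_all
      have "x \<in> {1..h}" using g bA unfolding Gset_def by (auto simp: PiE_iff)
      moreover have "(\<Sum>a\<in>A. C i a * int (g a)) mod int n = 0" using g(1) p unfolding Gset_def by auto
      ultimately show "x \<in> {x \<in> {1..h}. (C i \<beta> * int x + ?S) mod int n = 0}"
        using split[of i g] g(2,3) by simp
    qed
    note im' = this
    have inj': "inj_on (\<lambda>g. g \<beta>) {g \<in> ?G. ?\<rho> g = g'}"
    proof
      fix g1 g2 assume g1: "g1 \<in> {g \<in> ?G. ?\<rho> g = g'}" and g2: "g2 \<in> {g \<in> ?G. ?\<rho> g = g'}"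
        and e: "g1 \<beta> = g2 \<beta>"
      have P1: "g1 \<in> A \<rightarrow>\<^sub>E {1..h}" and P2: "g2 \<in> A \<rightarrow>\<^sub>E {1..h}" using g1 g2 unfolding Gset_def by auto
      show "g1 = g2"
      proof (rule PiE_ext[OF P1 P2])
        fix a assume a: "a \<in> A"
        show "g1 a = g2 a"
        proof (cases "a = \<beta>")
          case True thus ?thesis using e by simp
        next
          case False
          hence "a \<in> A'" using a by (simp add: A'_def)
          have "?\<rho> g1 a = ?\<rho> g2 a" using g1 g2 by simp
          thus ?thesis using \<open>a \<in> A'\<close> by simp
        qed
      qed
    qed
    have "card {g \<in> ?G. ?\<rho> g = g'} \<le> card {x \<in> {1..h}. (C i \<beta> * int x + ?S) mod int n = 0}"
      by (rule card_inj_on_le[OF inj' im']) simp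
    also have "\<dots> \<le> 2 * nat \<bar>C i \<beta>\<bar>" by (rule residue_count[OF ci n hn])
    also have "\<dots> \<le> 2 * M" using Mi by simp
    finally show ?thesis .
  qed
  have fP': "finite (A' \<rightarrow>\<^sub>E {1..h})" by (rule finite_PiE[OF fA']) simp
  have fG': "finite ?G'" unfolding Gset_def by (rule finite_subset[OF _ fP']) (rule Collect_restrict)
  have fP: "finite (A \<rightarrow>\<^sub>E {1..h})" by (rule finite_PiE[OF snoc.prems(1)]) simp
  have fG: "finite ?G" unfolding Gset_def by (rule finite_subset[OF _ fP]) (rule Collect_restrict)
  have subU: "?G \<subseteq> (\<Union>g'\<in>?\<rho> ` ?G. {g \<in> ?G. ?\<rho> g = g'})" by auto
  have finU: "finite (\<Union>g'\<in>?\<rho> ` ?G. {g \<in> ?G. ?\<rho> g = g'})" using fG by auto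
  have "card ?G \<le> card (\<Union>g'\<in>?\<rho> ` ?G. {g \<in> ?G. ?\<rho> g = g'})" by (rule card_mono[OF finU subU])
  also have "\<dots> \<le> (\<Sum>g'\<in>?\<rho> ` ?G. card {g \<in> ?G. ?\<rho> g = g'})"
    by (rule card_UN_le) (use fG in simp)
  also have "\<dots> \<le> (\<Sum>g'\<in>?\<rho> ` ?G. 2 * M)" by (intro sum_mono fib) (use img in auto)
  also have "\<dots> = card (?\<rho> ` ?G) * (2 * M)" by simp
  also have "\<dots> \<le> card ?G' * (2 * M)" by (intro mult_right_mono card_mono fG' img) simp
  also have "\<dots> \<le> (2 * M) ^ length piv * h ^ (card A' - length piv) * (2 * M)" using IH by simp
  also have "\<dots> = (2 * M) ^ length (piv @ [p]) * h ^ (card A - length (piv @ [p]))"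
    using bA snoc.prems(1) unfolding A'_def by (simp add: card_Diff_singleton)
  finally show ?case .
qed


context comb begin
lemma tri_triC: "tri piv \<Longrightarrow> triC coef piv \<and> distinct (map fst piv)"
  unfolding tri_def triC_def by auto
end

definition occX :: "(nat list \<times> int list) list \<Rightarrow> nat \<Rightarrow> nat \<Rightarrow> nat" where
  "occX X i b = count (mset (fst (X!i))) b"
definition coefX :: "(nat list \<times> int list) list \<Rightarrow> nat \<Rightarrow> nat \<Rightarrow> int" where
  "coefX X i b = cf (fst (X!i)) (snd (X!i)) b"
definition vsX :: "(nat list \<times> int list) list \<Rightarrow> nat list" where
  "vsX X = remdups (concat (map fst X))"

lemma set_nth_image: "set X = (\<lambda>i. X!i) ` {..<length X}"
  by (auto simp: in_set_conv_nth image_iff)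

lemma set_vsX: "set (vsX X) = (\<Union>i<length X. set (fst (X!i)))"
proof -
  have "set (vsX X) = (\<Union>x\<in>set X. set (fst x))" by (simp add: vsX_def)
  also have "\<dots> = (\<Union>i<length X. set (fst (X!i)))" by (subst set_nth_image) (simp add: image_image)
  finally show ?thesis .
qed

lemma comb_inst:
  assumes "\<And>i. i < length X \<Longrightarrow> length (fst (X!i)) = length (snd (X!i)) \<and> set (snd (X!i)) \<subseteq> {1,-1}"
  shows "comb (length X) (occX X) (coefX X) (set (vsX X))"
proof
  show "finite (set (vsX X))" by simp
next
  fix i b assume "i < length X" "0 < occX X i b"
  thus "b \<in> set (vsX X)" unfolding set_vsX occX_def by auto
next
  fix i b assume i: "i < length X"
  show "\<bar>coefX X i b\<bar> \<le> int (occX X i b)" unfolding coefX_def occX_def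
    using cf_props[of "fst (X!i)" "snd (X!i)" b] assms[OF i] by auto
  show "even (int (occX X i b) - coefX X i b)" unfolding coefX_def occX_def
    using cf_props[of "fst (X!i)" "snd (X!i)" b] assms[OF i] by auto
qed

lemma constraint_cf:
  assumes "length J = p" "length e = p"
  shows "(\<Sum>t<p. e ! t * int (J ! t)) = (\<Sum>a\<in>set J. cf J e a * int a)"
  using sum_nth_zip[OF assms, of int] sum_cf[of "set J" J int e] by simp

lemma comb_X:
  assumes XB: "X \<in> B_set n P" and L3: "3 \<le> length P"
  shows "\<exists>piv. triC (coefX X) piv \<and> distinct (map fst piv) \<and> set (map fst piv) \<subseteq> {..<length X}
     \<and> 2 * length (vsX X) + length X + 1 \<le> sum_list P + 2 * length piv"
proof -
  have lenX: "length X = length P" and XA: "\<forall>i<length P. X!i \<in> A_set n (P!i)"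
    and cl: "is_cluster (map fst X)"
    and mu: "\<forall>x \<in> (\<Union>i<length P. set (fst (X!i))). 2 \<le> count (\<Sum>i<length P. mset (fst (X!i))) x"
    using XB unfolding B_set_def by auto
  have Ai: "length (fst (X!i)) = P!i \<and> length (snd (X!i)) = P!i \<and> (\<forall>j\<in>set (fst (X!i)). 1 \<le> j \<and> 2*j \<le> n)
     \<and> set (snd (X!i)) \<subseteq> {1,-1} \<and> (\<Sum>t<P!i. snd (X!i) ! t * int (fst (X!i) ! t)) mod int n = 0"
    if "i < length X" for i
  proof -
    have "X!i \<in> A_set n (P!i)" using XA that lenX by auto
    thus ?thesis unfolding A_set_def by (cases "X!i") auto
  qed
  interpret C: comb "length X" "occX X" "coefX X" "set (vsX X)" by (rule comb_inst) (use Ai in auto)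
  have NN: "C.NN = sum_list P"
  proof -
    have "C.NN = (\<Sum>b\<in>set (vsX X). \<Sum>i<length X. count (mset (fst (X!i))) b)"
      unfolding C.NN_def by (simp add: C.mm_def occX_def)
    also have "\<dots> = (\<Sum>i<length X. \<Sum>b\<in>set (vsX X). count (mset (fst (X!i))) b)" by (rule sum.swap)
    also have "\<dots> = (\<Sum>i<length X. length (fst (X!i)))"
    proof (intro sum.cong refl)
      fix i assume "i \<in> {..<length X}"
      hence "set (fst (X!i)) \<subseteq> set (vsX X)" unfolding set_vsX by auto
      thus "(\<Sum>b\<in>set (vsX X). count (mset (fst (X!i))) b) = length (fst (X!i))"
        unfolding count_mset by (intro sum_count_set) auto
    qed
    also have "\<dots> = (\<Sum>i<length P. P!i)" using Ai lenX by (intro sum.cong) auto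
    also have "\<dots> = sum_list P" by (simp add: sum_list_sum_nth atLeast0LessThan)
    finally show ?thesis .
  qed
  have adj: "C.adjR = {(i, k). i < length (map fst X) \<and> k < length (map fst X)
                  \<and> set (map fst X ! i) \<inter> set (map fst X ! k) \<noteq> {}}"
    unfolding C.adjR_def occX_def by auto
  have conn: "(a, x) \<in> C.adjR\<^sup>*" if "a < length X" "x < length X" for a x
    using cl that unfolding is_cluster_def adj by auto
  have mult: "2 \<le> C.mm b" if "b \<in> set (vsX X)" for b
  proof -
    have "b \<in> (\<Union>i<length P. set (fst (X!i)))" using that lenX unfolding set_vsX by simp
    hence "2 \<le> count (\<Sum>i<length P. mset (fst (X!i))) b" using mu by blast
    moreover have "C.mm b = (\<Sum>i<length X. count (mset (fst (X!i))) b)" by (simp add: C.mm_def occX_def)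
    ultimately show ?thesis unfolding count_sum lenX by simp
  qed
  have nondeg: "\<exists>b'. b' \<noteq> b \<and> coefX X i b' \<noteq> 0" if i: "i < length X" and c1: "\<bar>coefX X i b\<bar> = 1" for i b
  proof (rule ccontr)
    assume "\<not> (\<exists>b'. b' \<noteq> b \<and> coefX X i b' \<noteq> 0)"
    hence z: "\<And>b'. b' \<noteq> b \<Longrightarrow> cf (fst (X!i)) (snd (X!i)) b' = 0" unfolding coefX_def by blast
    let ?J = "fst (X!i)" and ?e = "snd (X!i)"
    have c1': "cf ?J ?e b = 1 \<or> cf ?J ?e b = -1" using c1 unfolding coefX_def by auto
    have bJ: "b \<in> set ?J" using c1 cf_nz[of ?J ?e b] unfolding coefX_def by auto
    have "(\<Sum>t<P!i. ?e ! t * int (?J ! t)) = (\<Sum>a\<in>set ?J. cf ?J ?e a * int a)"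
      using Ai[OF i] by (intro constraint_cf) auto
    also have "\<dots> = cf ?J ?e b * int b + (\<Sum>a\<in>set ?J - {b}. cf ?J ?e a * int a)"
      by (rule sum.remove) (use bJ in auto)
    also have "(\<Sum>a\<in>set ?J - {b}. cf ?J ?e a * int a) = 0" using z by (intro sum.neutral) auto
    finally have "(cf ?J ?e b * int b) mod int n = 0" using Ai[OF i] by simp
    hence "int n dvd int b" using c1' by (auto simp: dvd_eq_mod_eq_0[symmetric])
    hence "n dvd b" by simp
    moreover have "1 \<le> b" "2 * b \<le> n" using Ai[OF i] bJ by auto
    ultimately show False using dvd_imp_le[of n b] by simp
  qed
  have L3': "3 \<le> length X" using L3 lenX by simp
  obtain piv where piv: "C.tri piv" "set (map fst piv) \<subseteq> {..<length X}"
    "2 * card (set (vsX X)) + length X + 1 \<le> C.NN + 2 * length piv"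
    using C.comb_main[OF L3' conn mult nondeg] by blast
  have "card (set (vsX X)) = length (vsX X)" unfolding vsX_def by (rule distinct_card) simp
  thus ?thesis using piv C.tri_triC[OF piv(1)] NN by (intro exI[of _ piv]) auto
qed


fun idx :: "'a list \<Rightarrow> 'a \<Rightarrow> nat" where
  "idx [] x = 0"
| "idx (y # ys) x = (if y = x then 0 else Suc (idx ys x))"

lemma idx_lt: "x \<in> set ys \<Longrightarrow> idx ys x < length ys"
  by (induction ys) auto

lemma idx_nth: "x \<in> set ys \<Longrightarrow> ys ! idx ys x = x"
  by (induction ys) auto

lemma inj_idx: "inj_on (idx ys) (set ys)"
  by (rule inj_on_inverseI[where g="(!) ys"]) (rule idx_nth)

definition patX :: "(nat list \<times> int list) list \<Rightarrow> nat list list" where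
  "patX X = map (\<lambda>x. map (idx (vsX X)) (fst x)) X"

definition sgX :: "(nat list \<times> int list) list \<Rightarrow> int list list" where
  "sgX X = map snd X"

definition rb :: "nat list \<Rightarrow> nat list list \<Rightarrow> int list list \<Rightarrow> (nat list \<times> int list) list" where
  "rb vs pat sg = map (\<lambda>i. (map ((!) vs) (pat!i), sg!i)) [0..<length pat]"

lemma rb_X: "rb (vsX X) (patX X) (sgX X) = X"
proof (rule nth_equalityI)
  show "length (rb (vsX X) (patX X) (sgX X)) = length X" by (simp add: rb_def patX_def)
next
  fix i assume "i < length (rb (vsX X) (patX X) (sgX X))"
  hence i: "i < length X" by (simp add: rb_def patX_def)
  have sub: "set (fst (X!i)) \<subseteq> set (vsX X)" using i unfolding set_vsX by auto
  have "map ((!) (vsX X)) (map (idx (vsX X)) (fst (X!i))) = map id (fst (X!i))"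
    unfolding map_map by (rule map_cong[OF refl]) (use sub in \<open>auto intro: idx_nth\<close>)
  hence "map ((!) (vsX X)) (map (idx (vsX X)) (fst (X!i))) = fst (X!i)" by simp
  thus "rb (vsX X) (patX X) (sgX X) ! i = X ! i" using i by (simp add: rb_def patX_def sgX_def)
qed

definition pivX :: "nat list \<Rightarrow> (nat list \<times> int list) list \<Rightarrow> (nat \<times> nat) list" where
  "pivX P X = (SOME piv. triC (coefX X) piv \<and> distinct (map fst piv) \<and> set (map fst piv) \<subseteq> {..<length X}
     \<and> 2 * length (vsX X) + length X + 1 \<le> sum_list P + 2 * length piv)"

lemma pivX:
  assumes "X \<in> B_set n P" "3 \<le> length P"
  shows "triC (coefX X) (pivX P X) \<and> distinct (map fst (pivX P X)) \<and> set (map fst (pivX P X)) \<subseteq> {..<length X}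
     \<and> 2 * length (vsX X) + length X + 1 \<le> sum_list P + 2 * length (pivX P X)"
  unfolding pivX_def by (rule someI_ex) (rule comb_X[OF assms])

definition pvX :: "nat list \<Rightarrow> (nat list \<times> int list) list \<Rightarrow> (nat \<times> nat) list" where
  "pvX P X = map (\<lambda>(i, b). (i, idx (vsX X) b)) (pivX P X)"

definition CP :: "nat list list \<Rightarrow> int list list \<Rightarrow> nat \<Rightarrow> nat \<Rightarrow> int" where
  "CP pat sg i \<beta> = cf (pat ! i) (sg ! i) \<beta>"

definition gX :: "(nat list \<times> int list) list \<Rightarrow> nat \<Rightarrow> nat" where
  "gX X = restrict (\<lambda>\<beta>. vsX X ! \<beta>) {..<length (vsX X)}"

lemma sub_vs: "i < length X \<Longrightarrow> set (fst (X!i)) \<subseteq> set (vsX X)"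
  unfolding set_vsX by auto

lemma CP_coef:
  assumes "i < length X" "b \<in> set (vsX X)"
  shows "CP (patX X) (sgX X) i (idx (vsX X) b) = coefX X i b"
proof -
  have inj: "inj_on (idx (vsX X)) (insert b (set (fst (X!i))))"
    by (rule inj_on_subset[OF inj_idx]) (use assms sub_vs[OF assms(1)] in blast)
  have p: "patX X ! i = map (idx (vsX X)) (fst (X!i))" using assms(1) by (simp add: patX_def)
  have q: "sgX X ! i = snd (X!i)" using assms(1) by (simp add: sgX_def)
  show ?thesis unfolding CP_def coefX_def p q by (rule cf_map[OF inj])
qed

lemma coefX_vs: "i < length X \<Longrightarrow> coefX X i b \<noteq> 0 \<Longrightarrow> b \<in> set (vsX X)"
proof -
  assume a: "i < length X" "coefX X i b \<noteq> 0"
  have "b \<in> set (fst (X!i))" using a(2) cf_nz unfolding coefX_def by metis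
  thus ?thesis using sub_vs[OF a(1)] by blast
qed

lemma pv_props:
  assumes XB: "X \<in> B_set n P" and L3: "3 \<le> length P"
  shows "triC (CP (patX X) (sgX X)) (pvX P X)" "set (map snd (pvX P X)) \<subseteq> {..<length (vsX X)}"
    "set (map fst (pvX P X)) \<subseteq> {..<length X}" "length (pvX P X) \<le> length X"
    "2 * length (vsX X) + length X + 1 \<le> sum_list P + 2 * length (pvX P X)"
proof -
  let ?piv = "pivX P X"
  have pv: "triC (coefX X) ?piv" "distinct (map fst ?piv)" "set (map fst ?piv) \<subseteq> {..<length X}"
    "2 * length (vsX X) + length X + 1 \<le> sum_list P + 2 * length ?piv" using pivX[OF assms] by auto
  have rows: "fst (?piv ! j) < length X" if "j < length ?piv" for j
  proof -
    have "map fst ?piv ! j \<in> set (map fst ?piv)" by (rule nth_mem) (simp add: that)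
    hence "fst (?piv ! j) \<in> set (map fst ?piv)" using that by simp
    thus ?thesis using pv(3) by auto
  qed
  have tr: "\<forall>j<length ?piv. coefX X (fst (?piv!j)) (snd (?piv!j)) \<noteq> 0
      \<and> (\<forall>j'<j. coefX X (fst (?piv!j')) (snd (?piv!j)) = 0)" using pv(1) unfolding triC_def by simp
  have diag: "coefX X (fst (?piv!j)) (snd (?piv!j)) \<noteq> 0" if "j < length ?piv" for j
    using tr that by simp
  have bvs: "snd (?piv!j) \<in> set (vsX X)" if "j < length ?piv" for j
    using coefX_vs[OF rows[OF that] diag[OF that]] .
  have pvn: "pvX P X ! j = (fst (?piv!j), idx (vsX X) (snd (?piv!j)))" if "j < length ?piv" for j
    using that unfolding pvX_def by (simp add: case_prod_beta)
  show "triC (CP (patX X) (sgX X)) (pvX P X)" unfolding triC_def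
  proof (intro allI impI conjI)
    fix j assume "j < length (pvX P X)"
    hence j: "j < length ?piv" by (simp add: pvX_def)
    show "CP (patX X) (sgX X) (fst (pvX P X ! j)) (snd (pvX P X ! j)) \<noteq> 0"
      using CP_coef[OF rows[OF j] bvs[OF j]] diag[OF j] pvn[OF j] by simp
    fix j' assume j': "j' < j"
    hence j'l: "j' < length ?piv" using j by simp
    have "coefX X (fst (?piv!j')) (snd (?piv!j)) = 0" using tr j j' by simp
    thus "CP (patX X) (sgX X) (fst (pvX P X ! j')) (snd (pvX P X ! j)) = 0"
      using CP_coef[OF rows[OF j'l] bvs[OF j]] pvn[OF j] pvn[OF j'l] by simp
  qed
  show "set (map snd (pvX P X)) \<subseteq> {..<length (vsX X)}"
  proof
    fix y assume "y \<in> set (map snd (pvX P X))"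
    then obtain j where j0: "j < length (map snd (pvX P X))" "map snd (pvX P X) ! j = y"
      by (meson in_set_conv_nth)
    have j: "j < length ?piv" "y = snd (pvX P X ! j)" using j0 by (simp_all add: pvX_def)
    thus "y \<in> {..<length (vsX X)}" using idx_lt[OF bvs[OF j(1)]] pvn[OF j(1)] by simp
  qed
  have mf: "map fst (pvX P X) = map fst ?piv" unfolding pvX_def by (induction ?piv) auto
  show "set (map fst (pvX P X)) \<subseteq> {..<length X}" unfolding mf by (rule pv(3))
  have "length ?piv = card (set (map fst ?piv))" using distinct_card[OF pv(2)] by simp
  also have "\<dots> \<le> card {..<length X}" by (rule card_mono) (use pv(3) in auto)
  finally show "length (pvX P X) \<le> length X" by (simp add: pvX_def)
  show "2 * length (vsX X) + length X + 1 \<le> sum_list P + 2 * length (pvX P X)"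
    using pv(4) by (simp add: pvX_def)
qed

lemma B_Ai:
  assumes "X \<in> B_set n P" "i < length X"
  shows "length (fst (X!i)) = P!i \<and> length (snd (X!i)) = P!i \<and> (\<forall>j\<in>set (fst (X!i)). 1 \<le> j \<and> 2*j \<le> n)
     \<and> set (snd (X!i)) \<subseteq> {1,-1} \<and> (\<Sum>t<P!i. snd (X!i) ! t * int (fst (X!i) ! t)) mod int n = 0"
proof -
  have "length X = length P" "\<forall>i<length P. X!i \<in> A_set n (P!i)" using assms(1) unfolding B_set_def by auto
  hence "X!i \<in> A_set n (P!i)" using assms(2) by auto
  thus ?thesis unfolding A_set_def by (cases "X!i") auto
qed

lemma G_mem:
  assumes XB: "X \<in> B_set n P" and L3: "3 \<le> length P"
  shows "gX X \<in> Gset {..<length (vsX X)} (CP (patX X) (sgX X)) (pvX P X) (n div 2) n"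
proof -
  let ?vs = "vsX X" and ?k = "length (vsX X)"
  have pie: "gX X \<in> {..<?k} \<rightarrow>\<^sub>E {1..n div 2}"
    unfolding gX_def
  proof (rule iffD2[OF restrict_PiE_iff], intro ballI)
    fix \<beta> assume "\<beta> \<in> {..<?k}"
    hence "?vs ! \<beta> \<in> set ?vs" by simp
    then obtain i where i: "i < length X" "?vs ! \<beta> \<in> set (fst (X!i))" unfolding set_vsX by blast
    have "1 \<le> ?vs ! \<beta> \<and> 2 * (?vs ! \<beta>) \<le> n" using B_Ai[OF XB i(1)] i(2) by blast
    thus "?vs ! \<beta> \<in> {1..n div 2}" by auto
  qed
  have cons: "(\<Sum>a\<in>{..<?k}. CP (patX X) (sgX X) (fst p) a * int (gX X a)) mod int n = 0"
    if p: "p \<in> set (pvX P X)" for p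
  proof -
    define i where "i = fst p"
    have iL: "i < length X" using pv_props(3)[OF XB L3] p unfolding i_def by auto
    let ?J = "fst (X!i)" and ?e = "snd (X!i)"
    have Ai: "length ?J = P!i" "length ?e = P!i"
      "(\<Sum>t<P!i. ?e ! t * int (?J ! t)) mod int n = 0" using B_Ai[OF XB iL] by auto
    have pi: "patX X ! i = map (idx ?vs) ?J" using iL by (simp add: patX_def)
    have si: "sgX X ! i = ?e" using iL by (simp add: sgX_def)
    have Jvs: "set ?J \<subseteq> set ?vs" by (rule sub_vs[OF iL])
    have "(\<Sum>a\<in>{..<?k}. CP (patX X) (sgX X) i a * int (gX X a)) = (\<Sum>a\<in>{..<?k}. cf (map (idx ?vs) ?J) ?e a * int (?vs ! a))"
      unfolding CP_def pi si gX_def by (intro sum.cong) auto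
    also have "\<dots> = sum_list (map (\<lambda>(x, e). e * int (?vs ! x)) (zip (map (idx ?vs) ?J) ?e))"
    proof (rule sum_cf[symmetric])
      show "finite {..<?k}" by simp
      show "set (map (idx ?vs) ?J) \<subseteq> {..<?k}" using Jvs idx_lt by fastforce
    qed
    also have "\<dots> = sum_list (map (\<lambda>(x, e). e * int x) (zip ?J ?e))"
    proof -
      have "map (\<lambda>(x, e). e * int (?vs ! x)) (zip (map (idx ?vs) ?J) ?e)
          = map (\<lambda>(x, e). e * int (?vs ! idx ?vs x)) (zip ?J ?e)"
        by (simp add: zip_map1 case_prod_beta)
      also have "\<dots> = map (\<lambda>(x, e). e * int x) (zip ?J ?e)"
      proof (rule map_cong[OF refl])
        fix z assume z: "z \<in> set (zip ?J ?e)"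
        obtain a b where zab: "z = (a, b)" by (cases z)
        from z have "a \<in> set ?J" unfolding zab by (rule set_zip_leftD)
        hence "?vs ! idx ?vs a = a" using Jvs by (intro idx_nth) blast
        thus "(\<lambda>(x, e). e * int (?vs ! idx ?vs x)) z = (\<lambda>(x, e). e * int x) z" unfolding zab by simp
      qed
      finally show ?thesis by simp
    qed
    also have "\<dots> = (\<Sum>t<P!i. ?e ! t * int (?J ! t))" by (rule sum_nth_zip[OF Ai(1,2), symmetric])
    finally show ?thesis using Ai(3) unfolding i_def by simp
  qed
  show ?thesis unfolding Gset_def using pie cons by blast
qed


lemma nth_le_sum_list: "i < length (P::nat list) \<Longrightarrow> P ! i \<le> sum_list P"
proof (induction P arbitrary: i)
  case Nil thus ?case by simp
next
  case (Cons a P) thus ?case by (cases i) (auto intro: trans_le_add2)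
qed

lemma length_le_sum_list: "\<forall>p\<in>set P. 1 \<le> p \<Longrightarrow> length P \<le> sum_list (P::nat list)"
  by (induction P) auto

lemma triC_distinct_snd:
  assumes "triC C piv"
  shows "distinct (map snd piv)"
proof -
  have tr: "\<forall>j<length piv. C (fst (piv!j)) (snd (piv!j)) \<noteq> 0 \<and> (\<forall>j'<j. C (fst (piv!j')) (snd (piv!j)) = 0)"
    using assms unfolding triC_def by simp
  show ?thesis unfolding distinct_conv_nth
  proof (intro allI impI)
    fix j j' assume a: "j < length (map snd piv)" "j' < length (map snd piv)" "j \<noteq> j'"
    show "map snd piv ! j \<noteq> map snd piv ! j'"
    proof (cases "j' < j")
      case True
      hence "C (fst (piv!j')) (snd (piv!j)) = 0" "C (fst (piv!j')) (snd (piv!j')) \<noteq> 0" using tr a by auto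
      thus ?thesis using a by auto
    next
      case False
      hence "j < j'" using a(3) by simp
      hence "C (fst (piv!j)) (snd (piv!j')) = 0" "C (fst (piv!j)) (snd (piv!j)) \<noteq> 0" using tr a by auto
      thus ?thesis using a by auto
    qed
  qed
qed

definition psi :: "nat list \<Rightarrow> (nat list \<times> int list) list \<Rightarrow> int list list \<times> nat list list \<times> (nat \<times> nat) list \<times> nat" where
  "psi P X = (sgX X, patX X, pvX P X, length (vsX X))"

lemma count_mset_le: "count (mset xs) x \<le> length xs"
  unfolding count_mset by (rule count_le_length)

lemma fiber_card:
  assumes X0: "X0 \<in> B_set n P" and L3: "3 \<le> length P" and n: "0 < n"
  shows "card {X \<in> B_set n P. psi P X = psi P X0}
     \<le> (2 * sum_list P) ^ length (pvX P X0) * (n div 2) ^ (length (vsX X0) - length (pvX P X0))"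
proof -
  let ?F = "{X \<in> B_set n P. psi P X = psi P X0}"
  let ?k = "length (vsX X0)" and ?C = "CP (patX X0) (sgX X0)" and ?pv = "pvX P X0"
  let ?G = "Gset {..<?k} ?C ?pv (n div 2) n"
  have im: "gX ` ?F \<subseteq> ?G"
  proof
    fix g assume "g \<in> gX ` ?F"
    then obtain X where X: "g = gX X" "X \<in> ?F" by (rule imageE)
    have "psi P X = psi P X0" using X(2) by simp
    hence e: "sgX X = sgX X0" "patX X = patX X0" "pvX P X = pvX P X0" "length (vsX X) = ?k"
      unfolding psi_def by simp_all
    have "gX X \<in> Gset {..<length (vsX X)} (CP (patX X) (sgX X)) (pvX P X) (n div 2) n"
      using X(2) G_mem L3 by simp
    thus "g \<in> ?G" using X(1) e by simp
  qed
  have inj: "inj_on gX ?F"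
  proof
    fix X Y assume X: "X \<in> ?F" and Y: "Y \<in> ?F" and g: "gX X = gX Y"
    have eX: "sgX X = sgX X0" "patX X = patX X0" "length (vsX X) = ?k" using X unfolding psi_def by simp_all
    have eY: "sgX Y = sgX X0" "patX Y = patX X0" "length (vsX Y) = ?k" using Y unfolding psi_def by simp_all
    have "vsX X = vsX Y"
    proof (rule nth_equalityI)
      show "length (vsX X) = length (vsX Y)" using eX eY by simp
      fix \<beta> assume "\<beta> < length (vsX X)"
      hence "gX X \<beta> = vsX X ! \<beta>" "gX Y \<beta> = vsX Y ! \<beta>" using eX eY unfolding gX_def by auto
      thus "vsX X ! \<beta> = vsX Y ! \<beta>" using g by simp
    qed
    thus "X = Y" using rb_X[of X] rb_X[of Y] eX eY by metis
  qed
  have fG: "finite ?G"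
  proof -
    have "finite ({..<?k} \<rightarrow>\<^sub>E {1..n div 2})" by (rule finite_PiE) simp_all
    moreover have "?G \<subseteq> {..<?k} \<rightarrow>\<^sub>E {1..n div 2}" unfolding Gset_def by (rule Collect_restrict)
    ultimately show ?thesis by (rule finite_subset[rotated])
  qed
  have "card ?F \<le> card ?G" by (rule card_inj_on_le[OF inj im fG])
  also have "\<dots> \<le> (2 * sum_list P) ^ length ?pv * (n div 2) ^ (card {..<?k} - length ?pv)"
  proof (rule count_tri)
    show "0 < n" by fact
    show "n div 2 \<le> n" by simp
    show "finite {..<?k}" by simp
    show "triC ?C ?pv" by (rule pv_props(1)[OF X0 L3])
    show "set (map snd ?pv) \<subseteq> {..<?k}" by (rule pv_props(2)[OF X0 L3])
    show "\<forall>p\<in>set ?pv. \<bar>?C (fst p) (snd p)\<bar> \<le> int (sum_list P)"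
    proof
      fix p assume p: "p \<in> set ?pv"
      define i where "i = fst p"
      have iL: "i < length X0" using pv_props(3)[OF X0 L3] p unfolding i_def by auto
      have Ai: "length (fst (X0!i)) = P!i" "length (snd (X0!i)) = P!i" "set (snd (X0!i)) \<subseteq> {1,-1}"
        using B_Ai[OF X0 iL] by auto
      have pi: "patX X0 ! i = map (idx (vsX X0)) (fst (X0!i))" using iL by (simp add: patX_def)
      have si: "sgX X0 ! i = snd (X0!i)" using iL by (simp add: sgX_def)
      have "\<bar>?C i (snd p)\<bar> \<le> int (count (mset (patX X0 ! i)) (snd p))"
        unfolding CP_def using cf_props[of "patX X0 ! i" "sgX X0 ! i" "snd p"] pi si Ai by simp
      also have "\<dots> \<le> int (length (patX X0 ! i))" using count_mset_le by simp
      also have "\<dots> = int (P ! i)" using pi Ai by simp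
      also have "\<dots> \<le> int (sum_list P)"
      proof -
        have "length X0 = length P" using X0 unfolding B_set_def by simp
        thus ?thesis using nth_le_sum_list[of i P] iL by simp
      qed
      finally show "\<bar>?C (fst p) (snd p)\<bar> \<le> int (sum_list P)" unfolding i_def .
    qed
  qed
  finally show ?thesis by simp
qed


definition FL :: "'a set \<Rightarrow> nat \<Rightarrow> 'a list set" where
  "FL A m = {xs. set xs \<subseteq> A \<and> length xs \<le> m}"

lemma finite_FL: "finite A \<Longrightarrow> finite (FL A m)"
  unfolding FL_def by (rule finite_lists_length_le)

definition Qset :: "nat list \<Rightarrow> (int list list \<times> nat list list \<times> (nat \<times> nat) list \<times> nat) set" where
  "Qset P = FL (FL {1,-1} (sum_list P)) (length P) \<times> FL (FL {..<sum_list P} (sum_list P)) (length P)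
     \<times> FL ({..<length P} \<times> {..<sum_list P}) (length P) \<times> {..sum_list P}"

lemma finite_Qset: "finite (Qset P)"
  unfolding Qset_def by (intro finite_cartesian_product finite_FL) auto

lemma k_le_N:
  assumes XB: "X \<in> B_set n P" and L3: "3 \<le> length P" and P1: "\<forall>p\<in>set P. 1 \<le> p"
  shows "length (vsX X) \<le> sum_list P"
proof -
  have lX: "length X = length P" using XB unfolding B_set_def by simp
  have "2 * length (vsX X) + length X + 1 \<le> sum_list P + 2 * length (pvX P X)" by (rule pv_props(5)[OF XB L3])
  moreover have "length (pvX P X) \<le> length X" by (rule pv_props(4)[OF XB L3])
  moreover have "length P \<le> sum_list P" by (rule length_le_sum_list[OF P1])
  ultimately show ?thesis using lX by linarith
qed

lemma psi_Q:
  assumes XB: "X \<in> B_set n P" and L3: "3 \<le> length P" and P1: "\<forall>p\<in>set P. 1 \<le> p"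
  shows "psi P X \<in> Qset P"
proof -
  have lX: "length X = length P" using XB unfolding B_set_def by simp
  have kN: "length (vsX X) \<le> sum_list P" by (rule k_le_N[OF assms])
  have nthX: "\<exists>i<length X. y = X ! i" if "y \<in> set X" for y using that by (metis in_set_conv_nth)
  have s0: "set y \<subseteq> {1,-1} \<and> length y \<le> sum_list P" if "y \<in> set (sgX X)" for y
  proof -
    have "y \<in> snd ` set X" using that by (simp add: sgX_def)
    then obtain x where x': "y = snd x" "x \<in> set X" by (rule imageE)
    hence x: "x \<in> set X" "y = snd x" by simp_all
    then obtain i where i: "i < length X" "x = X!i" using nthX by blast
    have "set (snd (X!i)) \<subseteq> {1,-1}" "length (snd (X!i)) = P!i" using B_Ai[OF XB i(1)] by auto
    moreover have "P!i \<le> sum_list P" using nth_le_sum_list[of i P] i(1) lX by simp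
    ultimately show ?thesis using x i by auto
  qed
  have s: "sgX X \<in> FL (FL {1,-1} (sum_list P)) (length P)"
    unfolding FL_def using s0 lX by (auto simp: sgX_def)
  have p0: "set y \<subseteq> {..<sum_list P} \<and> length y \<le> sum_list P" if "y \<in> set (patX X)" for y
  proof -
    have "y \<in> (\<lambda>x. map (idx (vsX X)) (fst x)) ` set X" using that by (simp add: patX_def)
    then obtain x where x': "y = map (idx (vsX X)) (fst x)" "x \<in> set X" by (rule imageE)
    hence x: "x \<in> set X" "y = map (idx (vsX X)) (fst x)" by simp_all
    then obtain i where i: "i < length X" "x = X!i" using nthX by blast
    have len: "length (fst (X!i)) = P!i" using B_Ai[OF XB i(1)] by auto
    have "P!i \<le> sum_list P" using nth_le_sum_list[of i P] i(1) lX by simp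
    moreover have "set y \<subseteq> {..<sum_list P}"
    proof
      fix z assume "z \<in> set y"
      then obtain w where w: "w \<in> set (fst (X!i))" "z = idx (vsX X) w" using x i by auto
      have "w \<in> set (vsX X)" using sub_vs[OF i(1)] w(1) by blast
      hence "z < length (vsX X)" using idx_lt w(2) by simp
      thus "z \<in> {..<sum_list P}" using kN by simp
    qed
    ultimately show ?thesis using x i len by auto
  qed
  have p: "patX X \<in> FL (FL {..<sum_list P} (sum_list P)) (length P)"
    unfolding FL_def using p0 lX by (auto simp: patX_def)
  have v0: "q \<in> {..<length P} \<times> {..<sum_list P}" if q: "q \<in> set (pvX P X)" for q
  proof -
    have "fst q \<in> set (map fst (pvX P X))" "snd q \<in> set (map snd (pvX P X))" using q by auto
    hence "fst q < length X" "snd q < length (vsX X)" using pv_props(2,3)[OF XB L3] by auto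
    thus ?thesis using lX kN by (cases q) auto
  qed
  have v: "pvX P X \<in> FL ({..<length P} \<times> {..<sum_list P}) (length P)"
    unfolding FL_def using v0 pv_props(4)[OF XB L3] lX by auto
  show ?thesis unfolding psi_def Qset_def using s p v kN by simp
qed

lemma card_B_bound:
  assumes L3: "3 \<le> length P" and P1: "\<forall>p\<in>set P. 1 \<le> p" and n: "1 \<le> n"
  shows "real (card (B_set n P)) \<le> real (card (Qset P)) * (2 * real (sum_list P)) ^ sum_list P
           * real n powr ((real (sum_list P) - real (length P) - 1) / 2)"
proof -
  let ?B = "B_set n P" and ?N = "sum_list P" and ?L = "length P"
  let ?a = "(real ?N - real ?L - 1) / 2"
  let ?bd = "(2 * real ?N) ^ ?N * real n powr ?a"
  have LN: "?L \<le> ?N" by (rule length_le_sum_list[OF P1])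
  have fib: "real (card {X \<in> ?B. psi P X = psi P X0}) \<le> ?bd" if X0: "X0 \<in> ?B" for X0
  proof -
    let ?s = "length (pvX P X0)" and ?k = "length (vsX X0)"
    have lX: "length X0 = ?L" using X0 unfolding B_set_def by simp
    have c: "card {X \<in> ?B. psi P X = psi P X0} \<le> (2 * ?N) ^ ?s * (n div 2) ^ (?k - ?s)"
      by (rule fiber_card[OF X0 L3]) (use n in simp)
    have sL: "?s \<le> ?L" using pv_props(4)[OF X0 L3] lX by simp
    have sk: "?s \<le> ?k"
    proof -
      have "distinct (map snd (pvX P X0))" by (rule triC_distinct_snd[OF pv_props(1)[OF X0 L3]])
      hence "?s = card (set (map snd (pvX P X0)))" using distinct_card by fastforce
      also have "\<dots> \<le> card {..<?k}" by (rule card_mono) (use pv_props(2)[OF X0 L3] in auto)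
      finally show ?thesis by simp
    qed
    have ex: "2 * (?k - ?s) + ?L + 1 \<le> ?N" using pv_props(5)[OF X0 L3] lX sk by linarith
    have ex': "real (?k - ?s) \<le> ?a" using ex by simp
    have "real (card {X \<in> ?B. psi P X = psi P X0}) \<le> real ((2 * ?N) ^ ?s * (n div 2) ^ (?k - ?s))"
      using c by linarith
    also have "\<dots> = (2 * real ?N) ^ ?s * real (n div 2) ^ (?k - ?s)" by simp
    also have "\<dots> \<le> (2 * real ?N) ^ ?N * real n ^ (?k - ?s)"
    proof (rule mult_mono)
      show "(2 * real ?N) ^ ?s \<le> (2 * real ?N) ^ ?N"
        by (rule power_increasing) (use sL LN L3 in auto)
      show "real (n div 2) ^ (?k - ?s) \<le> real n ^ (?k - ?s)" by (rule power_mono) auto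
    qed auto
    also have "real n ^ (?k - ?s) = real n powr real (?k - ?s)" using n by (simp add: powr_realpow)
    also have "\<dots> \<le> real n powr ?a" by (rule powr_mono[OF ex']) (use n in simp)
    finally show ?thesis by (simp add: mult_left_mono)
  qed
  have fI: "finite (psi P ` ?B)"
    by (rule finite_subset[OF _ finite_Qset[of P]]) (use psi_Q[OF _ L3 P1] in auto)
  have "?B = (\<Union>q\<in>psi P ` ?B. {X \<in> ?B. psi P X = q})" by auto
  hence "card ?B \<le> (\<Sum>q\<in>psi P ` ?B. card {X \<in> ?B. psi P X = q})"
    using card_UN_le[OF fI, of "\<lambda>q. {X \<in> ?B. psi P X = q}"] by simp
  hence "real (card ?B) \<le> real (\<Sum>q\<in>psi P ` ?B. card {X \<in> ?B. psi P X = q})"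
    by (rule of_nat_mono)
  also have "\<dots> = (\<Sum>q\<in>psi P ` ?B. real (card {X \<in> ?B. psi P X = q}))"
    by (rule of_nat_sum)
  also have "\<dots> \<le> (\<Sum>q\<in>psi P ` ?B. ?bd)"
  proof (rule sum_mono)
    fix q assume "q \<in> psi P ` ?B"
    then obtain X0 where "q = psi P X0" "X0 \<in> ?B" by (rule imageE)
    thus "real (card {X \<in> ?B. psi P X = q}) \<le> ?bd" using fib by simp
  qed
  also have "\<dots> = real (card (psi P ` ?B)) * ?bd" by simp
  also have "\<dots> \<le> real (card (Qset P)) * ?bd"
  proof (rule mult_right_mono)
    have "psi P ` ?B \<subseteq> Qset P" using psi_Q[OF _ L3 P1] by auto
    thus "real (card (psi P ` ?B)) \<le> real (card (Qset P))" using card_mono[OF finite_Qset] by simp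
    show "0 \<le> ?bd" by simp
  qed
  finally show ?thesis by (simp add: mult.assoc)
qed


theorem lemma3p1:
  fixes P :: "nat list"
  assumes "length P \<ge> 3" and "\<forall>p\<in>set P. p \<ge> 1"
  shows "(\<lambda>n. real (card (B_set n P))) \<in>
           o(\<lambda>n. real n powr ((real (sum_list P) - real (length P)) / 2))"
proof -
  let ?N = "sum_list P" and ?L = "length P"
  define a where "a = (real ?N - real ?L - 1) / 2"
  define C where "C = real (card (Qset P)) * (2 * real ?N) ^ ?N"
  have C0: "0 \<le> C" unfolding C_def by simp
  have bd: "real (card (B_set n P)) \<le> C * real n powr a" if "1 \<le> n" for n
    using card_B_bound[OF assms(1) assms(2) that] unfolding C_def a_def by simp
  have b: "(real ?N - real ?L) / 2 = a + 1 / 2" unfolding a_def by (simp add: field_simps)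
  show ?thesis
  proof (rule landau_o.smallI)
    fix c :: real assume c: "0 < c"
    define M where "M = max 1 (nat \<lceil>(C / c)\<^sup>2\<rceil>)"
    have ev: "\<forall>n\<ge>M. norm (real (card (B_set n P))) \<le> c * norm (real n powr ((real ?N - real ?L) / 2))"
    proof (intro allI impI)
      fix n assume nM: "M \<le> n"
      have n1: "1 \<le> n" using nM unfolding M_def by simp
      have "(C / c)\<^sup>2 \<le> real n" using nM unfolding M_def by simp
      hence "sqrt ((C / c)\<^sup>2) \<le> sqrt (real n)" by (rule real_sqrt_le_mono)
      hence Cc: "C / c \<le> sqrt (real n)" using C0 c by simp
      hence "C \<le> c * sqrt (real n)" using c by (simp add: divide_le_eq mult.commute)
      hence "C * real n powr a \<le> c * sqrt (real n) * real n powr a" by (rule mult_right_mono) simp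
      also have "\<dots> = c * real n powr (a + 1 / 2)"
        using n1 by (simp add: powr_add powr_half_sqrt mult.assoc mult.commute)
      finally have "real (card (B_set n P)) \<le> c * real n powr (a + 1 / 2)" using bd[OF n1] by linarith
      thus "norm (real (card (B_set n P))) \<le> c * norm (real n powr ((real ?N - real ?L) / 2))"
        unfolding b by simp
    qed
    show "eventually (\<lambda>n. norm (real (card (B_set n P))) \<le> c * norm (real n powr ((real ?N - real ?L) / 2))) at_top"
      unfolding eventually_at_top_linorder using ev by blast
  qed
qed

end
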